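(* Let $d, p_1, \ldots, p_d \in \mathbb{N}$ and set $p = p_1 + \cdots + p_d$. Let $\alpha \in (p-1,\infty)$ and let $\Sigma$ be a real symmetric positive definite $p\times p$ matrix. Let $\mathfrak{X}$ be a random $p\times p$ matrix with $\mathfrak{X} \sim \mathcal{W}_p(\alpha,\Sigma)$. Partition $\mathfrak{X}$ and $\Sigma$ conformally into $d\times d$ blocks $(\mathfrak{X}_{k\ell})_{1\le k,\ell\le d}$ and $(\Sigma_{k\ell})_{1\le k,\ell\le d}$, where the block $(k,\ell)$ has size $p_k\times p_\ell$. For each $i\in\{1,\ldots,d\}$, let $\mathfrak{X}_{1:i,1:i}$ (resp. $\Sigma_{1:i,1:i}$) denote the principal submatrix of $\mathfrak{X}$ (resp. $\Sigma$) composed of the blocks $(\mathfrak{X}_{k\ell})_{1\le k,\ell\le i}$ (resp. $(\Sigma_{k\ell})_{1\le k,\ell\le i}$). Then for all reals $\nu_1,\ldots,\nu_d\in[0,\infty)$, \[ \mathsf{E}\!\left(\prod_{i=1}^d |\mathfrak{X}_{1:i,1:i}|^{\nu_i}\right) = \prod_{i=1}^d |2 \Sigma_{1:i,1:i}|^{\nu_i} \frac{\Gamma_{p_i} \big(\alpha/2 - \sum_{k=1}^{i-1} p_k/2 + \sum_{k=i}^d \nu_k \big)}{\Gamma_{p_i} \big( \alpha/2 - \sum_{k=1}^{i-1} p_k/2 \big)}, \] with the convention that a sum over an empty set equals zero.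
   Context: $|\cdot|$ denotes the determinant and $\mathrm{etr}(\cdot)=\exp(\mathrm{tr}(\cdot))$. Let $\mathcal{S}_{++}^m$ denote the cone of real symmetric positive definite $m\times m$ matrices. For $m\in\mathbb{N}$ and real $\beta>(m-1)/2$, the multivariate gamma function is $\Gamma_m(\beta)=\int_{\mathcal{S}_{++}^m}|X|^{\beta-(m+1)/2}\,\mathrm{etr}(-X)\,\mathrm{d}X$. For $\alpha\in(p-1,\infty)$ and $\Sigma\in\mathcal{S}_{++}^p$, $\mathfrak{X}\sim\mathcal{W}_p(\alpha,\Sigma)$ (Wishart distribution) means that $\mathfrak{X}$ is a random matrix in $\mathcal{S}_{++}^p$ with probability density (with respect to Lebesgue measure on the independent entries of symmetric matrices) $f_{\alpha,\Sigma}(X)=|X|^{\alpha/2-(p+1)/2}\,\mathrm{etr}\{-(\Sigma^{-1}/2)X\}\big/\big(|2\Sigma|^{\alpha/2}\Gamma_p(\alpha/2)\big)$ for $X\in\mathcal{S}_{++}^p$. *)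

theory Defs
  imports "HOL-Probability.Probability" "Jordan_Normal_Form.Gauss_Jordan_Elimination"
    "Jordan_Normal_Form.Determinant"
begin

(* Index set of the independent entries (upper triangle incl. diagonal) of a symmetric m x m matrix *)
definition sym_idx :: "nat \<Rightarrow> (nat \<times> nat) set" where
  "sym_idx m = {(i, j). i \<le> j \<and> j < m}"

definition sym_lebesgue :: "nat \<Rightarrow> ((nat \<times> nat) \<Rightarrow> real) measure" where
  "sym_lebesgue m = PiM (sym_idx m) (\<lambda>_. lborel)"

definition sym_of :: "nat \<Rightarrow> ((nat \<times> nat) \<Rightarrow> real) \<Rightarrow> real mat" where
  "sym_of m x = mat m m (\<lambda>(i, j). if i \<le> j then x (i, j) else x (j, i))"

definition mat_trace :: "real mat \<Rightarrow> real" where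
  "mat_trace A = (\<Sum>i<dim_row A. A $$ (i, i))"

definition etr :: "real mat \<Rightarrow> real" where
  "etr A = exp (mat_trace A)"

definition inv_mat :: "real mat \<Rightarrow> real mat" where
  "inv_mat A = the (mat_inverse A)"

definition pos_def_mat :: "nat \<Rightarrow> real mat \<Rightarrow> bool" where
  "pos_def_mat m A \<longleftrightarrow> A \<in> carrier_mat m m \<and> transpose_mat A = A \<and>
     (\<forall>v \<in> carrier_vec m. v \<noteq> 0\<^sub>v m \<longrightarrow> v \<bullet> (A *\<^sub>v v) > 0)"

definition spd_set :: "nat \<Rightarrow> ((nat \<times> nat) \<Rightarrow> real) set" where
  "spd_set m = {x \<in> space (sym_lebesgue m). pos_def_mat m (sym_of m x)}"

definition multigamma :: "nat \<Rightarrow> real \<Rightarrow> real" where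
  "multigamma m \<beta> = (\<integral>x. indicator (spd_set m) x *
      (det (sym_of m x) powr (\<beta> - (real m + 1) / 2) * etr (- sym_of m x)) \<partial>sym_lebesgue m)"

definition wishart_density :: "nat \<Rightarrow> real \<Rightarrow> real mat \<Rightarrow> ((nat \<times> nat) \<Rightarrow> real) \<Rightarrow> real" where
  "wishart_density p \<alpha> \<Sigma> x = indicator (spd_set p) x *
     (det (sym_of p x) powr (\<alpha> / 2 - (real p + 1) / 2) *
      etr (- ((1 / 2) \<cdot>\<^sub>m inv_mat \<Sigma>) * sym_of p x)
      / (det (2 \<cdot>\<^sub>m \<Sigma>) powr (\<alpha> / 2) * multigamma p (\<alpha> / 2)))"

(* X ~ W_p(alpha, Sigma): X is a random symmetric matrix (given by its independent entries)
   with density f_{alpha,Sigma} w.r.t. Lebesgue measure on the independent entries *)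
definition wishart_distributed ::
    "'a measure \<Rightarrow> nat \<Rightarrow> real \<Rightarrow> real mat \<Rightarrow> ('a \<Rightarrow> (nat \<times> nat) \<Rightarrow> real) \<Rightarrow> bool" where
  "wishart_distributed M p \<alpha> \<Sigma> X \<longleftrightarrow>
     distributed M (sym_lebesgue p) X (\<lambda>x. ennreal (wishart_density p \<alpha> \<Sigma> x))"

definition lead_submat :: "nat \<Rightarrow> real mat \<Rightarrow> real mat" where
  "lead_submat n A = mat n n (\<lambda>(i, j). A $$ (i, j))"

end

theory Submission
  imports Defs
begin

definition qf :: "nat \<Rightarrow> real mat \<Rightarrow> (nat \<Rightarrow> real) \<Rightarrow> real" where
  "qf n A v = (\<Sum>i<n. \<Sum>j<n. A $$ (i,j) * v i * v j)"

definition mv :: "nat \<Rightarrow> real mat \<Rightarrow> (nat \<Rightarrow> real) \<Rightarrow> nat \<Rightarrow> real" where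
  "mv n A v i = (\<Sum>j<n. A $$ (i,j) * v j)"

lemma qf_cong: "(\<And>i. i < n \<Longrightarrow> v i = u i) \<Longrightarrow> qf n A v = qf n A u"
  by (simp add: qf_def)

lemma mv_cong: "(\<And>i. i < n \<Longrightarrow> v i = u i) \<Longrightarrow> mv n A v j = mv n A u j"
  by (simp add: mv_def)

lemma qf_mv: "qf n A v = (\<Sum>i<n. v i * mv n A v i)"
  by (simp add: qf_def mv_def sum_distrib_left ac_simps)

lemma mult_entry:
  assumes "A \<in> carrier_mat m n" "B \<in> carrier_mat n k" "i < m" "j < k"
  shows "(A * B) $$ (i,j) = (\<Sum>l<n. A $$ (i,l) * B $$ (l,j))"
  using assms by (simp add: scalar_prod_def atLeast0LessThan)

lemma one_entry: "i < n \<Longrightarrow> j < n \<Longrightarrow> (1\<^sub>m n :: real mat) $$ (i,j) = (if i = j then 1 else 0)"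
  by simp

lemma mv_mult:
  assumes "A \<in> carrier_mat n n" "B \<in> carrier_mat n n" "i < n"
  shows "mv n A (mv n B v) i = mv n (A * B) v i"
proof -
  have "mv n A (mv n B v) i = (\<Sum>j<n. \<Sum>l<n. A $$ (i,j) * B $$ (j,l) * v l)"
    by (simp add: mv_def sum_distrib_left ac_simps)
  also have "\<dots> = (\<Sum>l<n. \<Sum>j<n. A $$ (i,j) * B $$ (j,l) * v l)"
    by (rule sum.swap)
  also have "\<dots> = (\<Sum>l<n. (\<Sum>j<n. A $$ (i,j) * B $$ (j,l)) * v l)"
    by (simp add: sum_distrib_right)
  also have "\<dots> = mv n (A * B) v i"
    unfolding mv_def
  proof (intro sum.cong refl)
    fix l assume "l \<in> {..<n}"
    thus "(\<Sum>j<n. A $$ (i,j) * B $$ (j,l)) * v l = (A * B) $$ (i,l) * v l"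
      using mult_entry[OF assms(1,2) assms(3), of l] by simp
  qed
  finally show ?thesis .
qed

lemma mv_one: assumes "i < n" shows "mv n (1\<^sub>m n) v i = v i"
proof -
  have "mv n (1\<^sub>m n) v i = (\<Sum>j<n. if i = j then v j else 0)"
    unfolding mv_def using assms by (intro sum.cong) auto
  also have "\<dots> = v i" using assms by (simp add: sum.delta)
  finally show ?thesis .
qed

lemma scalar_prod_qf:
  assumes "A \<in> carrier_mat n n" "w \<in> carrier_vec n"
  shows "scalar_prod w (A *\<^sub>v w) = qf n A (\<lambda>i. w $ i)"
  using assms by (auto simp: scalar_prod_def qf_def sum_distrib_left atLeast0LessThan ac_simps
      intro!: sum.cong)

lemma pd_iff: "pos_def_mat n A \<longleftrightarrow> A \<in> carrier_mat n n \<and> transpose_mat A = A \<and>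
   (\<forall>v. (\<exists>i<n. v i \<noteq> 0) \<longrightarrow> qf n A v > 0)"
proof
  assume pd: "pos_def_mat n A"
  hence A: "A \<in> carrier_mat n n" "transpose_mat A = A" by (auto simp: pos_def_mat_def)
  show "A \<in> carrier_mat n n \<and> transpose_mat A = A \<and> (\<forall>v. (\<exists>i<n. v i \<noteq> 0) \<longrightarrow> qf n A v > 0)"
  proof (intro conjI allI impI A)
    fix v :: "nat \<Rightarrow> real" assume "\<exists>i<n. v i \<noteq> 0"
    then obtain i where i: "i < n" "v i \<noteq> 0" by auto
    have w: "vec n v \<in> carrier_vec n" by simp
    have "vec n v \<noteq> 0\<^sub>v n" using i by (metis index_vec index_zero_vec(1))
    hence "vec n v \<bullet> (A *\<^sub>v vec n v) > 0" using pd w by (auto simp: pos_def_mat_def)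
    also have "vec n v \<bullet> (A *\<^sub>v vec n v) = qf n A v"
      by (subst scalar_prod_qf[OF A(1) w]) (rule qf_cong, simp)
    finally show "qf n A v > 0" .
  qed
next
  assume H: "A \<in> carrier_mat n n \<and> transpose_mat A = A \<and> (\<forall>v. (\<exists>i<n. v i \<noteq> 0) \<longrightarrow> qf n A v > 0)"
  show "pos_def_mat n A" unfolding pos_def_mat_def
  proof (intro conjI ballI impI)
    fix v :: "real vec" assume v: "v \<in> carrier_vec n" "v \<noteq> 0\<^sub>v n"
    have "\<exists>i<n. v $ i \<noteq> 0"
    proof (rule ccontr)
      assume "\<not> ?thesis"
      hence "v = 0\<^sub>v n" using v(1) by (intro eq_vecI) auto
      thus False using v(2) by simp
    qed
    hence "qf n A (\<lambda>i. v $ i) > 0" using H by auto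
    thus "v \<bullet> (A *\<^sub>v v) > 0" using scalar_prod_qf[of A n v] H v by simp
  qed (use H in auto)
qed

lemma pd_sym: "pos_def_mat n A \<Longrightarrow> i < n \<Longrightarrow> j < n \<Longrightarrow> A $$ (i,j) = A $$ (j,i)"
  unfolding pos_def_mat_def by (metis carrier_matD index_transpose_mat(1))

lemma pd_qf_nonneg: assumes "pos_def_mat n A" shows "qf n A v \<ge> 0"
proof (cases "\<exists>i<n. v i \<noteq> 0")
  case True thus ?thesis using assms by (auto simp: pd_iff intro: less_imp_le)
next
  case False thus ?thesis by (simp add: qf_def)
qed

lemma det_0: "A \<in> carrier_mat 0 0 \<Longrightarrow> det A = 1"
proof -
  assume "A \<in> carrier_mat 0 0"
  hence "A = 1\<^sub>m 0" by (intro eq_matI) auto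
  thus ?thesis by simp
qed

lemma det_last_row_zero:
  assumes B: "B \<in> carrier_mat (Suc n) (Suc n)" and z: "\<And>j. j < n \<Longrightarrow> B $$ (n,j) = 0"
  shows "det B = B $$ (n,n) * det (lead_submat n B)"
proof -
  have "det B = (\<Sum>j<Suc n. B $$ (n,j) * cofactor B n j)"
    by (rule laplace_expansion_row[OF B]) simp
  also have "\<dots> = B $$ (n,n) * cofactor B n n" using z by simp
  also have "cofactor B n n = det (mat_delete B n n)"
  proof -
    have "even (n + n)" by simp
    thus ?thesis by (simp add: cofactor_def neg_one_even_power)
  qed
  also have "mat_delete B n n = lead_submat n B" using B
    by (auto simp: mat_delete_def lead_submat_def intro!: eq_matI)
  finally show ?thesis .
qed

lemma det_unit_lower:
  assumes L: "L \<in> carrier_mat n n" and lt: "\<And>i j. i < j \<Longrightarrow> j < n \<Longrightarrow> L $$ (i,j) = 0"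
    and d: "\<And>i. i < n \<Longrightarrow> L $$ (i,i) = 1"
  shows "det L = (1::real)"
proof -
  have "det L = prod_list (diag_mat L)" by (rule det_lower_triangular[OF lt L])
  also have "\<dots> = (\<Prod>i = 0..<n. L $$ (i,i))" using L by (simp add: prod_list_diag_prod)
  also have "\<dots> = 1" using d by simp
  finally show ?thesis .
qed

definition schur :: "nat \<Rightarrow> real mat \<Rightarrow> real mat" where
  "schur n Q = mat n n (\<lambda>(i,j). Q $$ (i,j) - Q $$ (i,n) * Q $$ (n,j) / Q $$ (n,n))"

lemma det_schur:
  assumes Q: "Q \<in> carrier_mat (Suc n) (Suc n)" and q: "Q $$ (n,n) \<noteq> 0"
  shows "det Q = Q $$ (n,n) * det (schur n Q)"
proof -
  define L where "L = mat (Suc n) (Suc n) (\<lambda>(i,j). if i = j then 1 else if i = n then - Q $$ (n,j) / Q $$ (n,n) else (0::real))"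
  have L: "L \<in> carrier_mat (Suc n) (Suc n)" by (simp add: L_def)
  have dL: "det L = 1" by (rule det_unit_lower[OF L]) (auto simp: L_def)
  have QL: "(Q * L) $$ (i,j) = (if j = n then Q $$ (i,n) else Q $$ (i,j) - Q $$ (i,n) * Q $$ (n,j) / Q $$ (n,n))"
    if ij: "i < Suc n" "j < Suc n" for i j
  proof -
    have "(Q * L) $$ (i,j) = (\<Sum>k<Suc n. Q $$ (i,k) * L $$ (k,j))" by (rule mult_entry[OF Q L ij])
    also have "\<dots> = (\<Sum>k<n. Q $$ (i,k) * L $$ (k,j)) + Q $$ (i,n) * L $$ (n,j)" by simp
    also have "(\<Sum>k<n. Q $$ (i,k) * L $$ (k,j)) = (\<Sum>k<n. if k = j then Q $$ (i,j) else 0)"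
      using ij by (intro sum.cong) (auto simp: L_def)
    also have "\<dots> = (if j < n then Q $$ (i,j) else 0)" by (simp add: sum.delta')
    finally show ?thesis using ij q by (auto simp: L_def)
  qed
  have QLc: "Q * L \<in> carrier_mat (Suc n) (Suc n)" using Q L by simp
  have "det (Q * L) = det Q" using det_mult[OF Q L] dL by simp
  also have "det (Q * L) = (Q * L) $$ (n,n) * det (lead_submat n (Q * L))"
    by (rule det_last_row_zero[OF QLc]) (use q in \<open>simp add: QL\<close>)
  also have "lead_submat n (Q * L) = schur n Q"
    by (auto simp: lead_submat_def schur_def QL intro!: eq_matI)
  finally show ?thesis using QL[of n n] by simp
qed

lemma det_block:
  assumes X: "X \<in> carrier_mat (Suc n) (Suc n)" and Ai: "Ai \<in> carrier_mat n n"
    and inv: "Ai * lead_submat n X = 1\<^sub>m n"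
  shows "det X = det (lead_submat n X) *
     (X $$ (n,n) - (\<Sum>i<n. \<Sum>j<n. X $$ (n,i) * Ai $$ (i,j) * X $$ (j,n)))"
proof -
  define w where "w j = (\<Sum>i<n. X $$ (n,i) * Ai $$ (i,j))" for j
  define U where "U = mat (Suc n) (Suc n) (\<lambda>(i,j). if i = j then 1 else if i = n then - w j else (0::real))"
  have U: "U \<in> carrier_mat (Suc n) (Suc n)" by (simp add: U_def)
  have dU: "det U = 1" by (rule det_unit_lower[OF U]) (auto simp: U_def)
  have inv': "(\<Sum>k<n. Ai $$ (i,k) * X $$ (k,j)) = (if i = j then 1 else 0)" if "i < n" "j < n" for i j
  proof -
    have "(Ai * lead_submat n X) $$ (i,j) = (\<Sum>k<n. Ai $$ (i,k) * lead_submat n X $$ (k,j))"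
      by (rule mult_entry[OF Ai _ that]) (simp add: lead_submat_def)
    also have "\<dots> = (\<Sum>k<n. Ai $$ (i,k) * X $$ (k,j))" using that by (simp add: lead_submat_def)
    finally show ?thesis using inv that by simp
  qed
  have UX: "(U * X) $$ (i,j) = (if i = n then X $$ (n,j) - (\<Sum>k<n. w k * X $$ (k,j)) else X $$ (i,j))"
    if ij: "i < Suc n" "j < Suc n" for i j
  proof -
    have "(U * X) $$ (i,j) = (\<Sum>k<Suc n. U $$ (i,k) * X $$ (k,j))" by (rule mult_entry[OF U X ij])
    also have "\<dots> = (\<Sum>k<n. U $$ (i,k) * X $$ (k,j)) + U $$ (i,n) * X $$ (n,j)" by simp
    finally have e: "(U * X) $$ (i,j) = (\<Sum>k<n. U $$ (i,k) * X $$ (k,j)) + U $$ (i,n) * X $$ (n,j)" .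
    show ?thesis
    proof (cases "i = n")
      case True
      have "(\<Sum>k<n. U $$ (i,k) * X $$ (k,j)) = (\<Sum>k<n. - (w k * X $$ (k,j)))"
        using True by (intro sum.cong) (auto simp: U_def)
      thus ?thesis using e True by (simp add: U_def sum_negf)
    next
      case False
      have "(\<Sum>k<n. U $$ (i,k) * X $$ (k,j)) = (\<Sum>k<n. if i = k then X $$ (i,j) else 0)"
        using False ij by (intro sum.cong) (auto simp: U_def)
      also have "\<dots> = X $$ (i,j)" using False ij by (simp add: sum.delta)
      finally show ?thesis using e False ij by (simp add: U_def)
    qed
  qed
  have last0: "(U * X) $$ (n,j) = 0" if j: "j < n" for j
  proof -
    have "(\<Sum>k<n. w k * X $$ (k,j)) = (\<Sum>k<n. \<Sum>i<n. X $$ (n,i) * Ai $$ (i,k) * X $$ (k,j))"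
      by (simp add: w_def sum_distrib_right)
    also have "\<dots> = (\<Sum>i<n. \<Sum>k<n. X $$ (n,i) * Ai $$ (i,k) * X $$ (k,j))"
      by (rule sum.swap)
    also have "\<dots> = (\<Sum>i<n. X $$ (n,i) * (if i = j then 1 else 0))"
      using inv' j by (simp add: sum_distrib_left[symmetric] mult.assoc)
    also have "\<dots> = X $$ (n,j)" using j by (simp add: if_distrib sum.delta cong: if_cong)
    finally show ?thesis using UX[of n j] j by simp
  qed
  have UXc: "U * X \<in> carrier_mat (Suc n) (Suc n)" using U X by simp
  have "det (U * X) = det X" using det_mult[OF U X] dU by simp
  also have "det (U * X) = (U * X) $$ (n,n) * det (lead_submat n (U * X))"
    by (rule det_last_row_zero[OF UXc last0])
  also have "lead_submat n (U * X) = lead_submat n X"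
    by (auto simp: lead_submat_def UX intro!: eq_matI)
  also have "(U * X) $$ (n,n) = X $$ (n,n) - (\<Sum>i<n. \<Sum>j<n. X $$ (n,i) * Ai $$ (i,j) * X $$ (j,n))"
  proof -
    have "(\<Sum>k<n. w k * X $$ (k,n)) = (\<Sum>k<n. \<Sum>i<n. X $$ (n,i) * Ai $$ (i,k) * X $$ (k,n))"
      by (simp add: w_def sum_distrib_right)
    also have "\<dots> = (\<Sum>i<n. \<Sum>k<n. X $$ (n,i) * Ai $$ (i,k) * X $$ (k,n))"
      by (rule sum.swap)
    finally show ?thesis using UX[of n n] by simp
  qed
  finally show ?thesis by (simp add: mult.commute)
qed

lemma lead_submat_carrier[simp]: "lead_submat k A \<in> carrier_mat k k"
  by (simp add: lead_submat_def)

lemma lead_submat_dim[simp]: "dim_row (lead_submat k A) = k" "dim_col (lead_submat k A) = k"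
  by (simp_all add: lead_submat_def)

lemma lead_submat_index[simp]: "i < k \<Longrightarrow> j < k \<Longrightarrow> lead_submat k A $$ (i,j) = A $$ (i,j)"
  by (simp add: lead_submat_def)

lemma lead_submat_lead_submat: "k \<le> m \<Longrightarrow> lead_submat k (lead_submat m A) = lead_submat k A"
  by (auto simp: lead_submat_def intro!: eq_matI)

lemma lead_submat_full: "A \<in> carrier_mat n n \<Longrightarrow> lead_submat n A = A"
  by (auto simp: lead_submat_def intro!: eq_matI)

lemma inv_props:
  assumes A: "A \<in> carrier_mat n n" and d: "det A \<noteq> 0"
  shows "inv_mat A \<in> carrier_mat n n" "A * inv_mat A = 1\<^sub>m n" "inv_mat A * A = 1\<^sub>m n"
proof -
  have U: "A \<in> Units (ring_mat TYPE(real) n ())" by (rule det_non_zero_imp_unit[OF A d])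
  have "mat_inverse A \<noteq> None" using mat_inverse(1)[OF A, of "()"] U by blast
  then obtain B where B: "mat_inverse A = Some B" by auto
  from mat_inverse(2)[OF A B] B show "inv_mat A \<in> carrier_mat n n" "A * inv_mat A = 1\<^sub>m n" "inv_mat A * A = 1\<^sub>m n"
    by (auto simp: inv_mat_def)
qed

lemma mv_sym:
  assumes sym: "\<And>i j. i<n \<Longrightarrow> j<n \<Longrightarrow> A$$(i,j) = A$$(j,i)"
  shows "(\<Sum>i<n. u i * mv n A a i) = (\<Sum>i<n. a i * mv n A u i)"
proof -
  have "(\<Sum>i<n. u i * mv n A a i) = (\<Sum>i<n. \<Sum>j<n. u i * A$$(i,j) * a j)"
    by (simp add: mv_def sum_distrib_left mult.assoc)
  also have "\<dots> = (\<Sum>j<n. \<Sum>i<n. u i * A$$(i,j) * a j)" by (rule sum.swap)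
  also have "\<dots> = (\<Sum>j<n. \<Sum>i<n. a j * (A$$(j,i) * u i))"
    using sym by (auto intro!: sum.cong simp: ac_simps)
  also have "\<dots> = (\<Sum>i<n. a i * mv n A u i)" by (simp add: mv_def sum_distrib_left)
  finally show ?thesis .
qed

lemma mv_lin: "mv n A (\<lambda>i. a i + t * u i) j = mv n A a j + t * mv n A u j"
  by (simp add: mv_def sum.distrib sum_distrib_left algebra_simps)

lemma qf_shift:
  assumes sym: "\<And>i j. i<n \<Longrightarrow> j<n \<Longrightarrow> A$$(i,j) = A$$(j,i)"
  shows "qf n A (\<lambda>i. a i + t * u i) = qf n A a + 2 * t * (\<Sum>i<n. a i * mv n A u i) + t^2 * qf n A u"
proof -
  have "qf n A (\<lambda>i. a i + t * u i) = (\<Sum>i<n. (a i + t * u i) * (mv n A a i + t * mv n A u i))"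
    by (simp add: qf_mv mv_lin)
  also have "\<dots> = (\<Sum>i<n. a i * mv n A a i) + t * (\<Sum>i<n. a i * mv n A u i)
      + t * (\<Sum>i<n. u i * mv n A a i) + t^2 * (\<Sum>i<n. u i * mv n A u i)"
    by (simp add: algebra_simps sum.distrib sum_distrib_left power2_eq_square)
  also have "(\<Sum>i<n. u i * mv n A a i) = (\<Sum>i<n. a i * mv n A u i)" by (rule mv_sym[OF sym])
  finally show ?thesis by (simp add: qf_mv algebra_simps)
qed

lemma qf_Suc:
  assumes sym: "\<And>i. i < n \<Longrightarrow> X $$ (n,i) = X $$ (i,n)"
  shows "qf (Suc n) X v = qf n (lead_submat n X) v + 2 * v n * (\<Sum>i<n. X $$ (i,n) * v i) + X $$ (n,n) * (v n)^2"
proof -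
  have "qf (Suc n) X v = (\<Sum>i<n. (\<Sum>j<n. X $$ (i,j) * v i * v j) + X $$ (i,n) * v i * v n)
      + ((\<Sum>j<n. X $$ (n,j) * v n * v j) + X $$ (n,n) * v n * v n)"
    by (simp add: qf_def)
  also have "(\<Sum>j<n. X $$ (n,j) * v n * v j) = (\<Sum>j<n. X $$ (j,n) * v n * v j)"
    using sym by (intro sum.cong) auto
  also have "(\<Sum>i<n. (\<Sum>j<n. X $$ (i,j) * v i * v j) + X $$ (i,n) * v i * v n) =
     qf n (lead_submat n X) v + (\<Sum>i<n. X $$ (i,n) * v i * v n)"
    by (simp add: qf_def sum.distrib)
  finally show ?thesis
    by (simp add: sum_distrib_left sum_distrib_right power2_eq_square algebra_simps sum.distrib[symmetric])
qed

context
  fixes n :: nat and X Ai :: "real mat"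
  assumes X: "X \<in> carrier_mat (Suc n) (Suc n)" and Xsym: "transpose_mat X = X"
    and Ai: "Ai \<in> carrier_mat n n" and AAi: "lead_submat n X * Ai = 1\<^sub>m n"
begin

definition "bv i = X $$ (i,n)"
definition "uv = mv n Ai bv"
definition "cc = X $$ (n,n) - (\<Sum>i<n. \<Sum>j<n. X $$ (n,i) * Ai $$ (i,j) * X $$ (j,n))"

lemma Xs: "i < Suc n \<Longrightarrow> j < Suc n \<Longrightarrow> X $$ (i,j) = X $$ (j,i)"
  using X Xsym by (metis carrier_matD index_transpose_mat(1))

lemma Asym: "i < n \<Longrightarrow> j < n \<Longrightarrow> lead_submat n X $$ (i,j) = lead_submat n X $$ (j,i)"
  using Xs by simp

lemma A_uv: "i < n \<Longrightarrow> mv n (lead_submat n X) uv i = bv i"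
  unfolding uv_def using mv_mult[OF lead_submat_carrier Ai] AAi mv_one by simp

lemma cc_alt: "cc = X $$ (n,n) - (\<Sum>i<n. bv i * uv i)"
proof -
  have "(\<Sum>i<n. \<Sum>j<n. X $$ (n,i) * Ai $$ (i,j) * X $$ (j,n)) = (\<Sum>i<n. bv i * uv i)"
    using Xs by (auto simp: bv_def uv_def mv_def sum_distrib_left ac_simps intro!: sum.cong)
  thus ?thesis by (simp add: cc_def)
qed

lemma block_identity:
  "qf (Suc n) X v = qf n (lead_submat n X) (\<lambda>i. v i + v n * uv i) + cc * (v n)^2"
proof -
  have "qf n (lead_submat n X) (\<lambda>i. v i + v n * uv i) =
      qf n (lead_submat n X) v + 2 * v n * (\<Sum>i<n. v i * mv n (lead_submat n X) uv i)
      + (v n)^2 * qf n (lead_submat n X) uv"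
    by (rule qf_shift[OF Asym])
  also have "(\<Sum>i<n. v i * mv n (lead_submat n X) uv i) = (\<Sum>i<n. X $$ (i,n) * v i)"
    using A_uv by (auto simp: bv_def intro!: sum.cong)
  also have "qf n (lead_submat n X) uv = (\<Sum>i<n. bv i * uv i)"
    using A_uv by (auto simp: qf_mv intro!: sum.cong)
  finally show ?thesis
    using qf_Suc[of n X v] Xs by (simp add: cc_alt algebra_simps)
qed

lemma pd_block:
  assumes Apd: "pos_def_mat n (lead_submat n X)"
  shows "pos_def_mat (Suc n) X \<longleftrightarrow> cc > 0"
proof
  assume pd: "pos_def_mat (Suc n) X"
  define v :: "nat \<Rightarrow> real" where "v i = (if i < n then - uv i else 1)" for i
  have ex: "\<exists>i<Suc n. v i \<noteq> 0" by (auto simp: v_def intro!: exI[of _ n])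
  have "qf (Suc n) X v > 0" using pd ex unfolding pd_iff by blast
  also have "qf (Suc n) X v = qf n (lead_submat n X) (\<lambda>i. v i + v n * uv i) + cc * (v n)^2"
    by (rule block_identity)
  also have "qf n (lead_submat n X) (\<lambda>i. v i + v n * uv i) = qf n (lead_submat n X) (\<lambda>i. 0)"
    by (rule qf_cong) (simp add: v_def)
  finally show "cc > 0" by (simp add: qf_def v_def)
next
  assume c: "cc > 0"
  show "pos_def_mat (Suc n) X" unfolding pd_iff
  proof (intro conjI allI impI X Xsym)
    fix v :: "nat \<Rightarrow> real" assume "\<exists>i<Suc n. v i \<noteq> 0"
    show "qf (Suc n) X v > 0"
    proof (cases "v n = 0")
      case True
      then obtain i where i: "i < n" "v i \<noteq> 0" using \<open>\<exists>i<Suc n. v i \<noteq> 0\<close> less_Suc_eq by auto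
      have "qf n (lead_submat n X) (\<lambda>i. v i + v n * uv i) > 0"
        using Apd i True by (auto simp: pd_iff)
      thus ?thesis using block_identity[of v] True by simp
    next
      case False
      have "qf n (lead_submat n X) (\<lambda>i. v i + v n * uv i) \<ge> 0" by (rule pd_qf_nonneg[OF Apd])
      moreover have "cc * (v n)^2 > 0" using c False by simp
      ultimately show ?thesis using block_identity[of v] by simp
    qed
  qed
qed

lemma det_block': "det X = det (lead_submat n X) * cc"
proof -
  have "Ai * lead_submat n X = 1\<^sub>m n"
    using AAi Ai by (metis lead_submat_carrier mat_mult_left_right_inverse)
  thus ?thesis using det_block[OF X Ai] by (simp add: cc_def)
qed

end

lemma pd_sub:
  assumes pd: "pos_def_mat m X" and k: "k \<le> m"
  shows "pos_def_mat k (lead_submat k X)"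
  unfolding pd_iff
proof (intro conjI allI impI)
  have Xc: "X \<in> carrier_mat m m" using pd by (simp add: pd_iff)
  show "lead_submat k X \<in> carrier_mat k k" by simp
  show "transpose_mat (lead_submat k X) = lead_submat k X"
  proof (rule eq_matI)
    fix i j assume "i < dim_row (lead_submat k X)" "j < dim_col (lead_submat k X)"
    thus "transpose_mat (lead_submat k X) $$ (i, j) = lead_submat k X $$ (i, j)"
      using pd_sym[OF pd, of j i] k by simp
  qed simp_all
  fix v :: "nat \<Rightarrow> real" assume "\<exists>i<k. v i \<noteq> 0"
  define w :: "nat \<Rightarrow> real" where "w i = (if i < k then v i else 0)" for i
  obtain i0 where i0: "i0 < k" "v i0 \<noteq> 0" using \<open>\<exists>i<k. v i \<noteq> 0\<close> by auto
  have "\<exists>i<m. w i \<noteq> 0" using i0 k by (intro exI[of _ i0]) (auto simp: w_def)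
  hence "qf m X w > 0" using pd unfolding pd_iff by blast
  also have "qf m X w = (\<Sum>i<k. \<Sum>j<m. X $$ (i,j) * w i * w j)"
    unfolding qf_def using k by (intro sum.mono_neutral_right) (auto simp: w_def)
  also have "\<dots> = (\<Sum>i<k. \<Sum>j<k. X $$ (i,j) * w i * w j)"
    using k by (intro sum.cong refl sum.mono_neutral_right) (auto simp: w_def)
  also have "\<dots> = qf k (lead_submat k X) v" by (simp add: qf_def w_def)
  finally show "qf k (lead_submat k X) v > 0" .
qed

lemma pd_det_pos: "pos_def_mat n X \<Longrightarrow> det X > 0"
proof (induction n arbitrary: X)
  case 0
  thus ?case by (simp add: pd_iff det_0)
next
  case (Suc n)
  have X: "X \<in> carrier_mat (Suc n) (Suc n)" "transpose_mat X = X" using Suc.prems by (auto simp: pd_iff)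
  have Apd: "pos_def_mat n (lead_submat n X)" using pd_sub[OF Suc.prems] by simp
  have dA: "det (lead_submat n X) > 0" using Suc.IH[OF Apd] .
  have d0: "det (lead_submat n X) \<noteq> 0" using dA by simp
  note I = inv_props[OF lead_submat_carrier d0]
  have "cc n X (inv_mat (lead_submat n X)) > 0"
    using pd_block[OF X I(1) I(2) Apd] Suc.prems dA by simp
  thus ?case using det_block'[OF X I(1) I(2)] dA by simp
qed

lemma sylvester:
  "pos_def_mat n X \<longleftrightarrow> X \<in> carrier_mat n n \<and> transpose_mat X = X \<and> (\<forall>k\<in>{1..n}. det (lead_submat k X) > 0)"
proof (induction n arbitrary: X)
  case 0
  show ?case by (auto simp: pd_iff)
next
  case (Suc n)
  show ?case
  proof
    assume pd: "pos_def_mat (Suc n) X"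
    thus "X \<in> carrier_mat (Suc n) (Suc n) \<and> transpose_mat X = X \<and> (\<forall>k\<in>{1..Suc n}. det (lead_submat k X) > 0)"
      using pd_det_pos[OF pd_sub[OF pd]] by (auto simp: pd_iff)
  next
    assume H: "X \<in> carrier_mat (Suc n) (Suc n) \<and> transpose_mat X = X \<and> (\<forall>k\<in>{1..Suc n}. det (lead_submat k X) > 0)"
    have X: "X \<in> carrier_mat (Suc n) (Suc n)" "transpose_mat X = X" using H by auto
    have Apd: "pos_def_mat n (lead_submat n X)"
      unfolding Suc.IH
    proof (intro conjI ballI)
      show "transpose_mat (lead_submat n X) = lead_submat n X"
        using X by (auto intro!: eq_matI) (metis carrier_matD index_transpose_mat(1) less_SucI)
      fix k assume "k \<in> {1..n}"
      thus "det (lead_submat k (lead_submat n X)) > 0" using H by (simp add: lead_submat_lead_submat)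
    qed simp
    have dA: "det (lead_submat n X) > 0" using pd_det_pos[OF Apd] .
    have d0: "det (lead_submat n X) \<noteq> 0" using dA by simp
  note I = inv_props[OF lead_submat_carrier d0]
    have "det X > 0" using H lead_submat_full[OF X(1)] by (metis atLeastAtMost_iff le_add1 le_refl plus_1_eq_Suc)
    hence "cc n X (inv_mat (lead_submat n X)) > 0"
      using det_block'[OF X I(1) I(2)] dA by (simp add: zero_less_mult_iff)
    thus "pos_def_mat (Suc n) X" using pd_block[OF X I(1) I(2) Apd] by simp
  qed
qed

definition svv :: "nat \<Rightarrow> real mat \<Rightarrow> (nat \<Rightarrow> real) \<Rightarrow> real" where
  "svv n Q v = (\<Sum>j<n. Q $$ (j,n) * v j)"

context fixes n :: nat and Q :: "real mat"
  assumes Qpd: "pos_def_mat (Suc n) Q"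
begin

lemma Qc: "Q \<in> carrier_mat (Suc n) (Suc n)" using Qpd by (simp add: pd_iff)
lemma Qs: "i < Suc n \<Longrightarrow> j < Suc n \<Longrightarrow> Q $$ (i,j) = Q $$ (j,i)" using pd_sym[OF Qpd] .
lemma Qsn: "j < n \<Longrightarrow> Q $$ (n,j) = Q $$ (j,n)" using Qs by simp


lemma qpos: "Q $$ (n,n) > 0"
proof -
  define v :: "nat \<Rightarrow> real" where "v i = (if i = n then 1 else 0)" for i
  have "\<exists>i<Suc n. v i \<noteq> 0" by (auto simp: v_def intro!: exI[of _ n])
  hence "qf (Suc n) Q v > 0" using Qpd unfolding pd_iff by blast
  also have "qf (Suc n) Q v = qf n (lead_submat n Q) v + 2 * v n * (\<Sum>i<n. Q $$ (i,n) * v i) + Q $$ (n,n) * (v n)^2"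
    by (rule qf_Suc) (simp add: Qsn)
  also have "qf n (lead_submat n Q) v = qf n (lead_submat n Q) (\<lambda>_. 0)" by (rule qf_cong) (simp add: v_def)
  finally show ?thesis by (simp add: qf_def v_def)
qed

lemma schur_identity:
  "qf (Suc n) Q v = qf n (schur n Q) v + Q $$ (n,n) * (v n + svv n Q v / Q $$ (n,n))^2"
proof -
  define q where "q = Q $$ (n,n)"
  have q: "q > 0" using qpos by (simp add: q_def)
  have "qf n (schur n Q) v = (\<Sum>i<n. \<Sum>j<n. Q$$(i,j) * v i * v j - (Q$$(i,n) * v i) * (Q$$(j,n) * v j) / q)"
    unfolding qf_def by (intro sum.cong refl) (simp add: schur_def Qsn q_def field_simps)
  also have "\<dots> = qf n (lead_submat n Q) v - (\<Sum>i<n. \<Sum>j<n. (Q$$(i,n) * v i) * (Q$$(j,n) * v j))/q"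
    by (simp add: qf_def sum_subtractf sum_divide_distrib)
  also have "(\<Sum>i<n. \<Sum>j<n. (Q$$(i,n) * v i) * (Q$$(j,n) * v j)) = (svv n Q v)^2"
    by (simp add: svv_def power2_eq_square sum_product ac_simps)
  finally have 1: "qf n (schur n Q) v = qf n (lead_submat n Q) v - (svv n Q v)^2 / q" .
  have 2: "qf (Suc n) Q v = qf n (lead_submat n Q) v + 2 * v n * svv n Q v + q * (v n)^2"
    using qf_Suc[of n Q v] Qsn by (simp add: svv_def q_def ac_simps)
  have h1: "qf n (lead_submat n Q) v = qf n (schur n Q) v + (svv n Q v)^2 / q" using 1 by simp
  have e: "q * (v n + svv n Q v / q)^2 = q * (v n)^2 + 2 * v n * svv n Q v + (svv n Q v)^2 / q"
    using q by (simp add: field_simps power2_eq_square)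
  show ?thesis unfolding q_def[symmetric] using h1 2 e by linarith
qed

lemma schur_pd: "pos_def_mat n (schur n Q)"
  unfolding pd_iff
proof (intro conjI allI impI)
  show "schur n Q \<in> carrier_mat n n" by (simp add: schur_def)
  show "transpose_mat (schur n Q) = schur n Q"
    by (rule eq_matI) (auto simp: schur_def Qs Qsn)
  fix v :: "nat \<Rightarrow> real" assume "\<exists>i<n. v i \<noteq> 0"
  then obtain i0 where i0: "i0 < n" "v i0 \<noteq> 0" by auto
  define w where "w = v(n := - svv n Q v / Q $$ (n,n))"
  have "\<exists>i<Suc n. w i \<noteq> 0" using i0 by (intro exI[of _ i0]) (auto simp: w_def)
  hence "qf (Suc n) Q w > 0" using Qpd unfolding pd_iff by blast
  also have "qf (Suc n) Q w = qf n (schur n Q) w + Q $$ (n,n) * (w n + svv n Q w / Q $$ (n,n))^2"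
    by (rule schur_identity)
  also have "svv n Q w = svv n Q v" by (simp add: svv_def w_def)
  also have "qf n (schur n Q) w = qf n (schur n Q) v" by (rule qf_cong) (simp add: w_def)
  finally show "qf n (schur n Q) v > 0" by (simp add: w_def)
qed

lemma det_schur': "det Q = Q $$ (n,n) * det (schur n Q)"
  using det_schur[OF Qc] qpos by simp

lemma mv_schur:
  assumes i: "i < n"
  shows "mv n (schur n Q) g i = mv (Suc n) Q g i - mv (Suc n) Q g n * Q $$ (i,n) / Q $$ (n,n)"
proof -
  have q: "Q $$ (n,n) \<noteq> 0" using qpos by simp
  have "mv n (schur n Q) g i = (\<Sum>j<n. Q$$(i,j) * g j - Q $$ (i,n) / Q $$ (n,n) * (Q$$(n,j) * g j))"
    unfolding mv_def using i by (intro sum.cong refl) (simp add: schur_def algebra_simps)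
  also have "\<dots> = (\<Sum>j<n. Q$$(i,j) * g j) - Q $$ (i,n) / Q $$ (n,n) * (\<Sum>j<n. Q$$(n,j) * g j)"
    by (simp add: sum_subtractf sum_distrib_left)
  finally show ?thesis using q by (simp add: mv_def field_simps)
qed

lemma const_identity:
  "qf (Suc n) Q g = qf n (schur n Q) g + (mv (Suc n) Q g n)^2 / Q $$ (n,n)"
proof -
  have q: "Q $$ (n,n) > 0" using qpos .
  have m: "mv (Suc n) Q g n = svv n Q g + Q $$ (n,n) * g n"
    by (simp add: mv_def svv_def Qsn ac_simps)
  have "Q $$ (n,n) * (g n + svv n Q g / Q $$ (n,n))^2 = (svv n Q g + Q $$ (n,n) * g n)^2 / Q $$ (n,n)"
    using q by (simp add: field_simps power2_eq_square)
  thus ?thesis using schur_identity[of g] m by simp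
qed

end

lemma gauss1:
  assumes q: "q > 0"
  shows "(\<integral>\<^sup>+t. ennreal (exp (- q * (t - m)^2)) \<partial>lborel) = ennreal (sqrt (pi / q))"
proof -
  define \<sigma> where "\<sigma> = sqrt (1/(2*q))"
  have \<sigma>: "\<sigma> > 0" using q by (simp add: \<sigma>_def)
  have s2: "\<sigma>^2 = 1/(2*q)" using q by (simp add: \<sigma>_def)
  have nd: "exp (- q * (t-m)^2) = sqrt (pi/q) * normal_density m \<sigma> t" for t
  proof -
    have "sqrt (2 * pi * \<sigma>\<^sup>2) = sqrt (pi / q)" using s2 by simp
    moreover have "- (t - m)\<^sup>2 / (2 * \<sigma>\<^sup>2) = - q * (t-m)^2" unfolding s2 using q by (simp add: field_simps)
    ultimately show ?thesis using q by (simp add: normal_density_def)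
  qed
  have "(\<integral>\<^sup>+t. ennreal (normal_density m \<sigma> t) \<partial>lborel) = ennreal (\<integral>t. normal_density m \<sigma> t \<partial>lborel)"
    using \<sigma> by (intro nn_integral_eq_integral) auto
  also have "\<dots> = 1" using \<sigma> by simp
  finally have 1: "(\<integral>\<^sup>+t. ennreal (normal_density m \<sigma> t) \<partial>lborel) = 1" .
  have "(\<integral>\<^sup>+t. ennreal (exp (- q * (t - m)^2)) \<partial>lborel) =
      (\<integral>\<^sup>+t. ennreal (sqrt (pi/q)) * ennreal (normal_density m \<sigma> t) \<partial>lborel)"
    by (intro nn_integral_cong) (subst nd, simp add: ennreal_mult q less_imp_le)
  also have "\<dots> = ennreal (sqrt (pi/q)) * (\<integral>\<^sup>+t. ennreal (normal_density m \<sigma> t) \<partial>lborel)"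
    by (rule nn_integral_cmult) simp
  finally show ?thesis using 1 by simp
qed

lemma meas_qf:
  assumes "\<And>i. i < m \<Longrightarrow> (\<lambda>y. f y i) \<in> borel_measurable M"
  shows "(\<lambda>y. qf m Q (f y)) \<in> borel_measurable M"
  unfolding qf_def
  by (intro borel_measurable_sum borel_measurable_times borel_measurable_const) (auto intro: assms)

lemma meas_lin:
  fixes f :: "'a \<Rightarrow> nat \<Rightarrow> real"
  assumes "\<And>i. i < m \<Longrightarrow> (\<lambda>y. f y i) \<in> borel_measurable M"
  shows "(\<lambda>y. (\<Sum>i<m. c i * f y i)) \<in> borel_measurable M"
  by (intro borel_measurable_sum borel_measurable_times borel_measurable_const) (auto intro: assms)

lemma gauss:
  fixes \<iota> :: "nat \<Rightarrow> 'i"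
  assumes inj: "inj \<iota>"
  shows "pos_def_mat n Q \<Longrightarrow> (\<integral>\<^sup>+y. ennreal (exp (- qf n Q (\<lambda>i. y (\<iota> i)) + 2 * (\<Sum>i<n. mv n Q g i * y (\<iota> i))))
      \<partial>PiM (\<iota> ` {..<n}) (\<lambda>_. lborel)) = ennreal (pi powr (real n / 2) / sqrt (det Q) * exp (qf n Q g))"
proof (induction n arbitrary: Q g)
  case 0
  have "det Q = 1" using 0 by (intro det_0) (simp add: pd_iff)
  thus ?case by (simp add: PiM_empty nn_integral_count_space_finite qf_def)
next
  case (Suc n)
  interpret product_sigma_finite "\<lambda>_::'i. lborel::real measure" by standard
  let ?I = "\<iota> ` {..<n}"
  let ?M = "\<lambda>I. PiM I (\<lambda>_::'i. lborel::real measure)"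
  have ins: "\<iota> ` {..<Suc n} = insert (\<iota> n) ?I" by (simp add: lessThan_Suc)
  have nin: "\<iota> n \<notin> ?I" using inj by (auto simp: inj_eq)
  define q where "q = Q $$ (n,n)"
  define S where "S = schur n Q"
  define k where "k = mv (Suc n) Q g"
  have q: "q > 0" using qpos[OF Suc.prems] by (simp add: q_def)
  have Spd: "pos_def_mat n S" using schur_pd[OF Suc.prems] by (simp add: S_def)
  define sy where "sy y = (\<Sum>j<n. Q $$ (j,n) * y (\<iota> j))" for y :: "'i \<Rightarrow> real"
  define C where "C y = - qf n S (\<lambda>i. y (\<iota> i)) + 2 * (\<Sum>i<n. mv n S g i * y (\<iota> i)) + (k n)^2 / q" for y :: "'i \<Rightarrow> real"
  define F where "F y = ennreal (exp (- qf (Suc n) Q (\<lambda>i. y (\<iota> i)) + 2 * (\<Sum>i<Suc n. k i * y (\<iota> i))))" for y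
  have comp: "(\<lambda>y. y (\<iota> i)) \<in> borel_measurable (?M (\<iota> ` {..<m}))" if "i < m" for i m
    using measurable_component_singleton[of "\<iota> i" "\<iota> ` {..<m}" "\<lambda>_. lborel"] that by simp
  have [measurable]: "(\<lambda>y. qf (Suc n) Q (\<lambda>i. y (\<iota> i))) \<in> borel_measurable (?M (\<iota> ` {..<Suc n}))"
    by (rule meas_qf, rule comp)
  have [measurable]: "(\<lambda>y. (\<Sum>i<Suc n. k i * y (\<iota> i))) \<in> borel_measurable (?M (\<iota> ` {..<Suc n}))"
    by (rule meas_lin, rule comp)
  have [measurable]: "(\<lambda>y. qf n S (\<lambda>i. y (\<iota> i))) \<in> borel_measurable (?M ?I)"
    by (rule meas_qf, rule comp)
  have [measurable]: "(\<lambda>y. (\<Sum>i<n. mv n S g i * y (\<iota> i))) \<in> borel_measurable (?M ?I)"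
    by (rule meas_lin, rule comp)
  have Fm: "F \<in> borel_measurable (?M (insert (\<iota> n) ?I))"
    unfolding F_def ins[symmetric] by measurable
  have key: "F (y(\<iota> n := t)) = ennreal (exp (C y)) * ennreal (exp (- q * (t - (k n / q - sy y / q))^2))"
    if y: "y \<in> space (?M ?I)" for y t
  proof -
    define z where "z i = (y(\<iota> n := t)) (\<iota> i)" for i
    have zi: "z i = y (\<iota> i)" if "i < n" for i using that inj by (auto simp: z_def inj_eq)
    have zn: "z n = t" by (simp add: z_def)
    have "qf (Suc n) Q z = qf n S z + q * (z n + svv n Q z / q)^2"
      unfolding S_def q_def by (rule schur_identity[OF Suc.prems])
    also have "svv n Q z = sy y" unfolding svv_def sy_def using zi by (intro sum.cong) auto
    also have "qf n S z = qf n S (\<lambda>i. y (\<iota> i))" by (rule qf_cong) (simp add: zi)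
    finally have 1: "qf (Suc n) Q z = qf n S (\<lambda>i. y (\<iota> i)) + q * (t + sy y / q)^2" by (simp add: zn)
    have 2: "(\<Sum>i<Suc n. k i * z i) = (\<Sum>i<n. k i * y (\<iota> i)) + k n * t" using zi zn by simp
    have 3: "(\<Sum>i<n. mv n S g i * y (\<iota> i)) = (\<Sum>i<n. k i * y (\<iota> i)) - k n * sy y / q"
    proof -
      have "(\<Sum>i<n. mv n S g i * y (\<iota> i)) = (\<Sum>i<n. k i * y (\<iota> i) - k n / q * (Q $$ (i,n) * y (\<iota> i)))"
        by (intro sum.cong refl) (simp add: S_def mv_schur[OF Suc.prems] k_def q_def algebra_simps)
      also have "\<dots> = (\<Sum>i<n. k i * y (\<iota> i)) - k n * sy y / q"
        by (simp add: sum_subtractf sy_def sum_distrib_left sum_divide_distrib)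
      finally show ?thesis .
    qed
    have "F (y(\<iota> n := t)) = ennreal (exp (- qf (Suc n) Q z + 2 * (\<Sum>i<Suc n. k i * z i)))"
      unfolding F_def z_def by (rule refl)
    also have "- qf (Suc n) Q z + 2 * (\<Sum>i<Suc n. k i * z i) = C y + (- q * (t - (k n / q - sy y / q))^2)"
      unfolding 1 2 C_def 3 using q by (simp add: field_simps power2_eq_square)
    finally show ?thesis by (simp only: exp_add ennreal_mult[OF exp_ge_zero exp_ge_zero])
  qed
  have "(\<integral>\<^sup>+y. F y \<partial>?M (\<iota> ` {..<Suc n})) = (\<integral>\<^sup>+y. (\<integral>\<^sup>+t. F (y(\<iota> n := t)) \<partial>lborel) \<partial>?M ?I)"
    unfolding ins by (rule product_nn_integral_insert[OF _ nin Fm]) simp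
  also have "\<dots> = (\<integral>\<^sup>+y. ennreal (exp (C y)) * ennreal (sqrt (pi / q)) \<partial>?M ?I)"
  proof (intro nn_integral_cong)
    fix y assume y: "y \<in> space (?M ?I)"
    have "(\<integral>\<^sup>+t. F (y(\<iota> n := t)) \<partial>lborel) =
        (\<integral>\<^sup>+t. ennreal (exp (C y)) * ennreal (exp (- q * (t - (k n / q - sy y / q))^2)) \<partial>lborel)"
      by (intro nn_integral_cong) (rule key[OF y])
    also have "\<dots> = ennreal (exp (C y)) * (\<integral>\<^sup>+t. ennreal (exp (- q * (t - (k n / q - sy y / q))^2)) \<partial>lborel)"
      by (rule nn_integral_cmult) simp
    also have "\<dots> = ennreal (exp (C y)) * ennreal (sqrt (pi / q))" using gauss1[OF q] by simp
    finally show "(\<integral>\<^sup>+t. F (y(\<iota> n := t)) \<partial>lborel) = ennreal (exp (C y)) * ennreal (sqrt (pi / q))" .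
  qed
  also have "\<dots> = (\<integral>\<^sup>+y. ennreal (sqrt (pi / q) * exp ((k n)^2 / q)) *
      ennreal (exp (- qf n S (\<lambda>i. y (\<iota> i)) + 2 * (\<Sum>i<n. mv n S g i * y (\<iota> i)))) \<partial>?M ?I)"
  proof (intro nn_integral_cong)
    fix y :: "'i \<Rightarrow> real"
    have nn: "0 \<le> sqrt (pi/q)" using q by simp
    have eq: "exp (C y) * sqrt (pi / q) = sqrt (pi / q) * exp ((k n)^2 / q) *
        exp (- qf n S (\<lambda>i. y (\<iota> i)) + 2 * (\<Sum>i<n. mv n S g i * y (\<iota> i)))"
      unfolding C_def exp_add by (simp add: ac_simps)
    show "ennreal (exp (C y)) * ennreal (sqrt (pi / q)) = ennreal (sqrt (pi / q) * exp ((k n)^2 / q)) *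
      ennreal (exp (- qf n S (\<lambda>i. y (\<iota> i)) + 2 * (\<Sum>i<n. mv n S g i * y (\<iota> i))))"
      by (simp only: ennreal_mult[OF exp_ge_zero nn, symmetric]
          ennreal_mult[OF mult_nonneg_nonneg[OF nn exp_ge_zero] exp_ge_zero, symmetric] eq)
  qed
  also have "\<dots> = ennreal (sqrt (pi / q) * exp ((k n)^2 / q)) *
      (\<integral>\<^sup>+y. ennreal (exp (- qf n S (\<lambda>i. y (\<iota> i)) + 2 * (\<Sum>i<n. mv n S g i * y (\<iota> i)))) \<partial>?M ?I)"
    by (rule nn_integral_cmult) measurable
  also have "\<dots> = ennreal (sqrt (pi / q) * exp ((k n)^2 / q)) *
      ennreal (pi powr (real n / 2) / sqrt (det S) * exp (qf n S g))"
    by (simp only: Suc.IH[OF Spd])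
  also have "\<dots> = ennreal (pi powr (real (Suc n) / 2) / sqrt (det Q) * exp (qf (Suc n) Q g))"
  proof -
    have dS: "det S > 0" using pd_det_pos[OF Spd] .
    have dQ: "det Q = q * det S" using det_schur'[OF Suc.prems] by (simp add: q_def S_def)
    have cQ: "qf (Suc n) Q g = qf n S g + (k n)^2 / q"
      using const_identity[OF Suc.prems] by (simp add: S_def k_def q_def)
    have pp: "pi powr (real (Suc n) / 2) = pi powr (real n / 2) * sqrt pi"
      by (simp add: add_divide_distrib powr_add powr_half_sqrt)
    have "sqrt (pi / q) * exp ((k n)^2 / q) * (pi powr (real n / 2) / sqrt (det S) * exp (qf n S g)) =
        pi powr (real (Suc n) / 2) / sqrt (det Q) * exp (qf (Suc n) Q g)"
      unfolding pp dQ cQ exp_add using q dS by (simp add: real_sqrt_mult real_sqrt_divide exp_add field_simps)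
    moreover have "sqrt (pi / q) * exp ((k n)^2 / q) \<ge> 0" using q by simp
    ultimately show ?thesis by (metis ennreal_mult')
  qed
  finally show ?case unfolding F_def k_def by simp
qed

lemma inv_sym:
  fixes A B :: "real mat"
  assumes A: "A \<in> carrier_mat n n" and As: "transpose_mat A = A" and B: "B \<in> carrier_mat n n"
    and BA: "B * A = 1\<^sub>m n"
  shows "transpose_mat B = B"
proof -
  have AB: "A * B = 1\<^sub>m n" using mat_mult_left_right_inverse[of B n A] B A BA by blast
  have Bt: "transpose_mat B \<in> carrier_mat n n" using B by simp
  have "transpose_mat B * A = transpose_mat B * transpose_mat A" using As by simp
  also have "\<dots> = transpose_mat (A * B)" using transpose_mult[OF A B] by simp
  also have "\<dots> = 1\<^sub>m n" using AB by simp
  finally have BtA: "transpose_mat B * A = 1\<^sub>m n" .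
  have "transpose_mat B = transpose_mat B * (A * B)" using AB Bt by simp
  also have "\<dots> = (transpose_mat B * A) * B" using Bt A B by simp
  also have "\<dots> = B" using BtA B by simp
  finally show ?thesis .
qed

lemma inv_pd:
  assumes Apd: "pos_def_mat n A" and B: "B \<in> carrier_mat n n" and BA: "B * A = 1\<^sub>m n"
  shows "pos_def_mat n B"
proof -
  have A: "A \<in> carrier_mat n n" "transpose_mat A = A" using Apd by (auto simp: pd_iff)
  have AB: "A * B = 1\<^sub>m n" using mat_mult_left_right_inverse[of B n A] B A(1) BA by blast
  show ?thesis unfolding pd_iff
  proof (intro conjI allI impI B inv_sym[OF A B BA])
    fix v :: "nat \<Rightarrow> real" assume v: "\<exists>i<n. v i \<noteq> 0"
    define z where "z = mv n B v"
    have Az: "mv n A z i = v i" if "i < n" for i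
      unfolding z_def using mv_mult[OF A(1) B that] AB mv_one[OF that] by simp
    have "\<exists>i<n. z i \<noteq> 0"
    proof (rule ccontr)
      assume "\<not> ?thesis"
      hence "mv n A z i = 0" for i by (simp add: mv_def)
      thus False using v Az by fastforce
    qed
    hence "qf n A z > 0" using Apd by (auto simp: pd_iff)
    also have "qf n A z = (\<Sum>i<n. z i * v i)" by (simp add: qf_mv Az)
    also have "\<dots> = qf n B v" by (simp add: qf_mv z_def mult.commute)
    finally show "qf n B v > 0" .
  qed
qed

lemma qf_smult: "A \<in> carrier_mat n n \<Longrightarrow> qf n (c \<cdot>\<^sub>m A) v = c * qf n A v"
  by (simp add: qf_def sum_distrib_left ac_simps)

lemma pd_smult:
  assumes Apd: "pos_def_mat n A" and c: "c > 0"
  shows "pos_def_mat n (c \<cdot>\<^sub>m A)"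
proof -
  have A: "A \<in> carrier_mat n n" "transpose_mat A = A" using Apd by (auto simp: pd_iff)
  show ?thesis unfolding pd_iff
  proof (intro conjI allI impI)
    show "c \<cdot>\<^sub>m A \<in> carrier_mat n n" using A by simp
    show "transpose_mat (c \<cdot>\<^sub>m A) = c \<cdot>\<^sub>m A"
      using A by (intro eq_matI) (auto simp: pd_sym[OF Apd])
    fix v :: "nat \<Rightarrow> real" assume "\<exists>i<n. v i \<noteq> 0"
    hence "qf n A v > 0" using Apd by (auto simp: pd_iff)
    thus "qf n (c \<cdot>\<^sub>m A) v > 0" using qf_smult[OF A(1)] c by simp
  qed
qed

context
  fixes n :: nat and Sg S :: "real mat"
  assumes Sgpd: "pos_def_mat (Suc n) Sg" and Sc: "S \<in> carrier_mat (Suc n) (Suc n)"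
    and SSg: "S * Sg = 1\<^sub>m (Suc n)"
begin

lemma Sgc: "Sg \<in> carrier_mat (Suc n) (Suc n)" using Sgpd by (simp add: pd_iff)

lemma S_pd: "pos_def_mat (Suc n) S" by (rule inv_pd[OF Sgpd Sc SSg])

lemma S_sym: "i < Suc n \<Longrightarrow> j < Suc n \<Longrightarrow> S $$ (i,j) = S $$ (j,i)"
  using pd_sym[OF S_pd] .

lemma Snn: "S $$ (n,n) > 0" using qpos[OF S_pd] .

lemma SSg_entry: "i < Suc n \<Longrightarrow> j < Suc n \<Longrightarrow> (\<Sum>k<Suc n. S $$ (i,k) * Sg $$ (k,j)) = (if i = j then 1 else 0)"
  using mult_entry[OF Sc Sgc, of i j] SSg by simp

lemma schur_inv: "schur n S * lead_submat n Sg = 1\<^sub>m n"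
proof (rule eq_matI)
  fix i j assume "i < dim_row (1\<^sub>m n)" "j < dim_col (1\<^sub>m n)"
  hence ij: "i < n" "j < n" by auto
  have q: "S $$ (n,n) \<noteq> 0" using Snn by simp
  have e1: "(\<Sum>k<n. S $$ (i,k) * Sg $$ (k,j)) = (if i = j then 1 else 0) - S $$ (i,n) * Sg $$ (n,j)"
    using SSg_entry[of i j] ij by simp
  have e2: "(\<Sum>k<n. S $$ (n,k) * Sg $$ (k,j)) = - S $$ (n,n) * Sg $$ (n,j)"
    using SSg_entry[of n j] ij by simp
  have "(schur n S * lead_submat n Sg) $$ (i,j) = (\<Sum>k<n. schur n S $$ (i,k) * lead_submat n Sg $$ (k,j))"
    by (rule mult_entry) (auto simp: schur_def ij)
  also have "\<dots> = (\<Sum>k<n. S $$ (i,k) * Sg $$ (k,j) - S $$ (i,n) / S $$ (n,n) * (S $$ (n,k) * Sg $$ (k,j)))"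
    using ij by (intro sum.cong refl) (simp add: schur_def algebra_simps)
  also have "\<dots> = (\<Sum>k<n. S $$ (i,k) * Sg $$ (k,j)) - S $$ (i,n) / S $$ (n,n) * (\<Sum>k<n. S $$ (n,k) * Sg $$ (k,j))"
    by (simp add: sum_subtractf sum_distrib_left)
  also have "\<dots> = (if i = j then 1 else 0)" unfolding e1 e2 using q by simp
  finally show "(schur n S * lead_submat n Sg) $$ (i,j) = 1\<^sub>m n $$ (i,j)" using ij by simp
qed (auto simp: schur_def)

lemma det_Sg: "det Sg = det (lead_submat n Sg) / S $$ (n,n)"
proof -
  have 1: "det S * det Sg = 1" using det_mult[OF Sc Sgc] SSg by simp
  have 2: "det (schur n S) * det (lead_submat n Sg) = 1"
    using det_mult[of "schur n S" n "lead_submat n Sg"] schur_inv by (simp add: schur_def)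
  have 3: "det S = S $$ (n,n) * det (schur n S)" by (rule det_schur'[OF S_pd])
  have q: "S $$ (n,n) \<noteq> 0" using Snn by simp
  from 1 2 3 q show ?thesis by (simp add: field_simps) (metis mult.assoc mult.commute mult_1_right)
qed

end

lemma gamma_shift:
  assumes l: "l > 0" and a: "a > 0"
  shows "(\<integral>\<^sup>+t. ennreal (indicator {r<..} t * (t - r) powr (a - 1) * exp (- l * (t - r))) \<partial>lborel)
     = ennreal (Gamma a / l powr a)"
proof -
  define f where "f u = indicator {0<..} u * u powr (a - 1) * exp (- l * u)" for u :: real
  have fm: "(\<lambda>u. ennreal (f u)) \<in> borel_measurable borel" unfolding f_def by measurable
  have "(\<integral>\<^sup>+t. ennreal (indicator {r<..} t * (t - r) powr (a - 1) * exp (- l * (t - r))) \<partial>lborel)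
      = (\<integral>\<^sup>+t. ennreal (f (t - r)) \<partial>lborel)"
    by (intro nn_integral_cong) (simp add: f_def indicator_def)
  also have "\<dots> = ennreal \<bar>1::real\<bar> * (\<integral>\<^sup>+x. ennreal (f (r + 1 * x - r)) \<partial>lborel)"
    by (rule nn_integral_real_affine) (use fm in \<open>measurable\<close>)
  also have "\<dots> = (\<integral>\<^sup>+x. ennreal (f x) \<partial>lborel)" by simp
  also have "\<dots> = ennreal \<bar>1 / l\<bar> * (\<integral>\<^sup>+x. ennreal (f (0 + 1 / l * x)) \<partial>lborel)"
    by (rule nn_integral_real_affine[OF fm]) (use l in simp)
  also have "(\<integral>\<^sup>+x. ennreal (f (0 + 1 / l * x)) \<partial>lborel) =
      (\<integral>\<^sup>+x. ennreal (l powr (1 - a)) * ennreal (indicator {0..} x * x powr (a - 1) / exp x) \<partial>lborel)"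
  proof (intro nn_integral_cong)
    fix x :: real
    have "f (0 + 1 / l * x) = l powr (1 - a) * (indicator {0..} x * x powr (a - 1) / exp x)"
    proof (cases "x > 0")
      case True
      have "(x / l) powr (a - 1) = x powr (a - 1) / l powr (a - 1)" using True l by (simp add: powr_divide)
      also have "\<dots> = l powr (1 - a) * x powr (a - 1)"
        using l by (simp add: powr_minus_divide[symmetric] field_simps powr_diff)
      finally show ?thesis using True l by (simp add: f_def indicator_def exp_minus field_simps)
    next
      case False
      thus ?thesis using l by (cases "x = 0") (auto simp: f_def indicator_def zero_less_mult_iff zero_less_divide_iff)
    qed
    thus "ennreal (f (0 + 1 / l * x)) = ennreal (l powr (1 - a)) * ennreal (indicator {0..} x * x powr (a - 1) / exp x)"
      by (simp add: ennreal_mult'[symmetric])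
  qed
  also have "\<dots> = ennreal (l powr (1 - a)) * (\<integral>\<^sup>+x. ennreal (indicator {0..} x * x powr (a - 1) / exp x) \<partial>lborel)"
    by (rule nn_integral_cmult) measurable
  also have "(\<integral>\<^sup>+x. ennreal (indicator {0..} x * x powr (a - 1) / exp x) \<partial>lborel) = ennreal (Gamma a)"
    using Gamma_conv_nn_integral_real[OF a] by simp
  finally have "(\<integral>\<^sup>+t. ennreal (indicator {r<..} t * (t - r) powr (a - 1) * exp (- l * (t - r))) \<partial>lborel)
      = ennreal (1 / l) * (ennreal (l powr (1 - a)) * ennreal (Gamma a))" using l by simp
  also have "\<dots> = ennreal (Gamma a / l powr a)"
  proof -
    have "1 / l * (l powr (1 - a) * Gamma a) = Gamma a / l powr a"
      using l by (simp add: powr_diff field_simps)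
    moreover have "Gamma a \<ge> 0" using a by (simp add: Gamma_real_pos less_imp_le)
    ultimately show ?thesis using l by (simp add: ennreal_mult'[symmetric] ennreal_mult''[symmetric] ennreal_mult[symmetric])
  qed
  finally show ?thesis .
qed

lemma sym_of_entry: "i < p \<Longrightarrow> j < p \<Longrightarrow> sym_of p x $$ (i,j) = (if i \<le> j then x (i,j) else x (j,i))"
  by (simp add: sym_of_def)

lemma sym_of_carrier[simp]: "sym_of p x \<in> carrier_mat p p"
  by (simp add: sym_of_def)

lemma sym_of_transpose: "transpose_mat (sym_of p x) = sym_of p x"
  by (rule eq_matI) (auto simp: sym_of_def)

lemma meas_comp_sym:
  assumes "ij \<in> sym_idx p"
  shows "(\<lambda>x. x ij) \<in> borel_measurable (sym_lebesgue p)"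
  using measurable_component_singleton[OF assms, of "\<lambda>_. lborel"] by (simp add: sym_lebesgue_def)

lemma meas_entry:
  assumes "i < p" "j < p"
  shows "(\<lambda>x. sym_of p x $$ (i,j)) \<in> borel_measurable (sym_lebesgue p)"
proof (cases "i \<le> j")
  case True
  have "(\<lambda>x. sym_of p x $$ (i,j)) = (\<lambda>x. x (i,j))" using assms True by (simp add: sym_of_entry)
  thus ?thesis using meas_comp_sym[of "(i,j)" p] assms True by (simp add: sym_idx_def)
next
  case False
  have "(\<lambda>x. sym_of p x $$ (i,j)) = (\<lambda>x. x (j,i))" using assms False by (simp add: sym_of_entry)
  thus ?thesis using meas_comp_sym[of "(j,i)" p] assms False by (simp add: sym_idx_def)
qed

lemma meas_det:
  fixes F :: "'b \<Rightarrow> real mat"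
  assumes c: "\<And>x. F x \<in> carrier_mat m m"
    and e: "\<And>i j. i < m \<Longrightarrow> j < m \<Longrightarrow> (\<lambda>x. F x $$ (i,j)) \<in> borel_measurable M"
  shows "(\<lambda>x. det (F x)) \<in> borel_measurable M"
proof -
  have "det (F x) = (\<Sum>p\<in>{p. p permutes {0..<m}}. of_int (sign p) * (\<Prod>i\<in>{0..<m}. F x $$ (i, p i)))" for x
    using c[of x] by (simp add: det_def)
  hence eq: "(\<lambda>x. det (F x)) = (\<lambda>x. \<Sum>p\<in>{p. p permutes {0..<m}}. of_int (sign p) * (\<Prod>i\<in>{0..<m}. F x $$ (i, p i)))"
    by auto
  show ?thesis unfolding eq
  proof (intro borel_measurable_sum borel_measurable_times borel_measurable_const borel_measurable_prod)
    fix p i assume "p \<in> {p. p permutes {0..<m}}" "i \<in> {0..<m}"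
    hence "i < m" "p i < m" by (auto simp: permutes_in_image)
    thus "(\<lambda>x. F x $$ (i, p i)) \<in> borel_measurable M" by (rule e)
  qed
qed

lemma meas_det_lead:
  assumes "k \<le> p"
  shows "(\<lambda>x. det (lead_submat k (sym_of p x))) \<in> borel_measurable (sym_lebesgue p)"
  by (rule meas_det[of _ k]) (use assms in \<open>auto intro: meas_entry\<close>)

lemma meas_det_sym: "(\<lambda>x. det (sym_of p x)) \<in> borel_measurable (sym_lebesgue p)"
  by (rule meas_det[of _ p]) (auto intro: meas_entry)

lemma trace_mult:
  assumes "S \<in> carrier_mat p p" "X \<in> carrier_mat p p"
  shows "mat_trace (S * X) = (\<Sum>i<p. \<Sum>k<p. S $$ (i,k) * X $$ (k,i))"
  using assms by (auto simp: mat_trace_def scalar_prod_def atLeast0LessThan intro!: sum.cong)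

lemma meas_trace:
  assumes "S \<in> carrier_mat p p"
  shows "(\<lambda>x. mat_trace (S * sym_of p x)) \<in> borel_measurable (sym_lebesgue p)"
proof -
  have eq: "(\<lambda>x. mat_trace (S * sym_of p x)) = (\<lambda>x. \<Sum>i<p. \<Sum>k<p. S $$ (i,k) * sym_of p x $$ (k,i))"
    using trace_mult[OF assms] by simp
  show ?thesis unfolding eq
    by (intro borel_measurable_sum borel_measurable_times borel_measurable_const) (auto intro: meas_entry)
qed

lemma spd_set_eq: "spd_set p = {x \<in> space (sym_lebesgue p). \<forall>k\<in>{1..p}. det (lead_submat k (sym_of p x)) > 0}"
  unfolding spd_set_def using sylvester[of p] sym_of_transpose by auto

lemma spd_set_sets[measurable]: "spd_set p \<in> sets (sym_lebesgue p)"
  unfolding spd_set_eq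
proof (rule sets.sets_Collect_finite_All)
  fix k assume k: "k \<in> {1..p}"
  have [measurable]: "(\<lambda>x. det (lead_submat k (sym_of p x))) \<in> borel_measurable (sym_lebesgue p)"
    using meas_det_lead k by simp
  show "{x \<in> space (sym_lebesgue p). 0 < det (lead_submat k (sym_of p x))} \<in> sets (sym_lebesgue p)"
    by measurable
qed simp

lemma spd_subset: "spd_set p \<subseteq> space (sym_lebesgue p)" by (auto simp: spd_set_def)

definition wint :: "nat \<Rightarrow> real mat \<Rightarrow> real \<Rightarrow> ('k \<Rightarrow> nat) \<Rightarrow> ('k \<Rightarrow> real) \<Rightarrow> 'k set \<Rightarrow> ((nat \<times> nat) \<Rightarrow> real) \<Rightarrow> real" where
  "wint p S \<beta> nn \<nu> I x = indicator (spd_set p) x * ((\<Prod>i\<in>I. det (lead_submat (nn i) (sym_of p x)) powr \<nu> i) *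
     det (sym_of p x) powr (\<beta> - (real p + 1) / 2) * exp (- mat_trace (S * sym_of p x)))"

definition wval :: "nat \<Rightarrow> real mat \<Rightarrow> real \<Rightarrow> ('k \<Rightarrow> nat) \<Rightarrow> ('k \<Rightarrow> real) \<Rightarrow> 'k set \<Rightarrow> real" where
  "wval p Sg \<beta> nn \<nu> I = pi powr (real p * (real p - 1) / 4) *
     (\<Prod>m=1..p. Gamma (\<beta> + (\<Sum>i\<in>{i\<in>I. m \<le> nn i}. \<nu> i) - (real m - 1) / 2)) *
     det Sg powr \<beta> * (\<Prod>i\<in>I. det (lead_submat (nn i) Sg) powr \<nu> i)"

lemma wint_nonneg: "wint p S \<beta> nn \<nu> I x \<ge> 0"
  by (auto simp: wint_def intro!: mult_nonneg_nonneg prod_nonneg)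

lemma wint_meas:
  assumes S: "S \<in> carrier_mat p p" and nn: "\<forall>i\<in>I. nn i \<le> p"
  shows "wint p S \<beta> nn \<nu> I \<in> borel_measurable (sym_lebesgue p)"
proof -
  have [measurable]: "(\<lambda>x. \<Prod>i\<in>I. det (lead_submat (nn i) (sym_of p x)) powr \<nu> i) \<in> borel_measurable (sym_lebesgue p)"
  proof (intro borel_measurable_prod powr_real_measurable borel_measurable_const)
    fix i assume "i \<in> I"
    thus "(\<lambda>x. det (lead_submat (nn i) (sym_of p x))) \<in> borel_measurable (sym_lebesgue p)"
      using nn meas_det_lead by auto
  qed
  have [measurable]: "(\<lambda>x. det (sym_of p x)) \<in> borel_measurable (sym_lebesgue p)" by (rule meas_det_sym)
  have [measurable]: "(\<lambda>x. mat_trace (S * sym_of p x)) \<in> borel_measurable (sym_lebesgue p)" by (rule meas_trace[OF S])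
  show ?thesis unfolding wint_def[abs_def] by measurable
qed

definition Jn :: "nat \<Rightarrow> (nat \<times> nat) set" where "Jn n = (\<lambda>i. (i,n)) ` {..<n}"

lemma sym_idx_Suc: "sym_idx (Suc n) = sym_idx n \<union> insert (n,n) (Jn n)"
  by (auto simp: sym_idx_def Jn_def less_Suc_eq)

lemma sym_idx_disj: "sym_idx n \<inter> insert (n,n) (Jn n) = {}"
  by (auto simp: sym_idx_def Jn_def)

lemma nin_Jn: "(n,n) \<notin> Jn n" by (auto simp: Jn_def)

lemma finite_sym_idx: "finite (sym_idx n)"
proof -
  have "sym_idx n \<subseteq> {..<n} \<times> {..<n}" by (auto simp: sym_idx_def)
  thus ?thesis by (rule finite_subset) simp
qed

lemma finite_Jn: "finite (Jn n)" by (simp add: Jn_def)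

definition mk :: "nat \<Rightarrow> ((nat \<times> nat) \<Rightarrow> real) \<Rightarrow> ((nat \<times> nat) \<Rightarrow> real) \<Rightarrow> real \<Rightarrow> ((nat \<times> nat) \<Rightarrow> real)" where
  "mk n A b t = merge (sym_idx n) (insert (n,n) (Jn n)) (A, b((n,n) := t))"

lemma mk_app1: "ij \<in> sym_idx n \<Longrightarrow> mk n A b t ij = A ij"
  using sym_idx_disj by (simp add: mk_def)

lemma mk_app2: "i < n \<Longrightarrow> mk n A b t (i,n) = b (i,n)"
proof -
  assume i: "i < n"
  have "(i,n) \<in> insert (n,n) (Jn n)" using i by (auto simp: Jn_def)
  thus ?thesis using sym_idx_disj i by (simp add: mk_def)
qed

lemma mk_app3: "mk n A b t (n,n) = t"
  using sym_idx_disj by (simp add: mk_def)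

lemma mk_lead: "lead_submat n (sym_of (Suc n) (mk n A b t)) = sym_of n A"
  by (rule eq_matI) (auto simp: sym_of_def lead_submat_def mk_app1 sym_idx_def)

lemma mk_col: "i < n \<Longrightarrow> sym_of (Suc n) (mk n A b t) $$ (i,n) = b (i,n)"
  by (simp add: sym_of_def mk_app2)

lemma mk_row: "i < n \<Longrightarrow> sym_of (Suc n) (mk n A b t) $$ (n,i) = b (i,n)"
  by (simp add: sym_of_def mk_app2)

lemma mk_nn: "sym_of (Suc n) (mk n A b t) $$ (n,n) = t"
  by (simp add: sym_of_def mk_app3)

lemma mk_space: "mk n A b t \<in> space (sym_lebesgue (Suc n))"
proof -
  have "mk n A b t \<in> PiE (sym_idx n \<union> insert (n,n) (Jn n)) (\<lambda>_. UNIV)"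
    unfolding mk_def by (subst PiE_cancel_merge[OF sym_idx_disj]) simp
  thus ?thesis unfolding sym_lebesgue_def sym_idx_Suc space_PiM by simp
qed

lemma decomp:
  assumes f: "f \<in> borel_measurable (sym_lebesgue (Suc n))"
  shows "(\<integral>\<^sup>+x. f x \<partial>sym_lebesgue (Suc n)) =
    (\<integral>\<^sup>+A. (\<integral>\<^sup>+b. (\<integral>\<^sup>+t. f (mk n A b t) \<partial>lborel) \<partial>PiM (Jn n) (\<lambda>_. lborel)) \<partial>sym_lebesgue n)"
proof -
  interpret product_sigma_finite "\<lambda>_::nat\<times>nat. lborel::real measure" by standard
  let ?I = "sym_idx n" and ?J = "insert (n,n) (Jn n)"
  have fin: "finite ?I" "finite ?J" by (simp_all add: finite_sym_idx finite_Jn)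
  have f': "f \<in> borel_measurable (PiM (?I \<union> ?J) (\<lambda>_. lborel))"
    using f by (simp add: sym_lebesgue_def sym_idx_Suc)
  have "(\<integral>\<^sup>+x. f x \<partial>sym_lebesgue (Suc n)) =
      (\<integral>\<^sup>+A. (\<integral>\<^sup>+w. f (merge ?I ?J (A, w)) \<partial>PiM ?J (\<lambda>_. lborel)) \<partial>PiM ?I (\<lambda>_. lborel))"
    unfolding sym_lebesgue_def sym_idx_Suc by (rule product_nn_integral_fold[OF sym_idx_disj fin f'])
  also have "\<dots> = (\<integral>\<^sup>+A. (\<integral>\<^sup>+b. (\<integral>\<^sup>+t. f (mk n A b t) \<partial>lborel) \<partial>PiM (Jn n) (\<lambda>_. lborel)) \<partial>PiM ?I (\<lambda>_. lborel))"
  proof (intro nn_integral_cong)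
    fix A assume A: "A \<in> space (PiM ?I (\<lambda>_. lborel::real measure))"
    have m: "(\<lambda>w. f (merge ?I ?J (A, w))) \<in> borel_measurable (PiM ?J (\<lambda>_. lborel))"
      by (rule measurable_compose[OF measurable_compose[OF measurable_Pair1'[OF A] measurable_merge] f'])
    show "(\<integral>\<^sup>+w. f (merge ?I ?J (A, w)) \<partial>PiM ?J (\<lambda>_. lborel)) =
        (\<integral>\<^sup>+b. (\<integral>\<^sup>+t. f (mk n A b t) \<partial>lborel) \<partial>PiM (Jn n) (\<lambda>_. lborel))"
      unfolding mk_def by (rule product_nn_integral_insert[OF finite_Jn nin_Jn m])
  qed
  finally show ?thesis by (simp add: sym_lebesgue_def)
qed

lemma trace_Suc:
  assumes S: "S \<in> carrier_mat (Suc n) (Suc n)" and X: "X \<in> carrier_mat (Suc n) (Suc n)"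
    and Ss: "\<And>k. k < n \<Longrightarrow> S $$ (n,k) = S $$ (k,n)"
  shows "mat_trace (S * X) = (\<Sum>i<n. \<Sum>k<n. S $$ (i,k) * X $$ (k,i))
     + (\<Sum>i<n. S $$ (i,n) * (X $$ (n,i) + X $$ (i,n))) + S $$ (n,n) * X $$ (n,n)"
proof -
  have "mat_trace (S * X) = (\<Sum>i<Suc n. \<Sum>k<Suc n. S $$ (i,k) * X $$ (k,i))" by (rule trace_mult[OF S X])
  also have "\<dots> = (\<Sum>i<n. (\<Sum>k<n. S $$ (i,k) * X $$ (k,i)) + S $$ (i,n) * X $$ (n,i))
      + ((\<Sum>k<n. S $$ (n,k) * X $$ (k,n)) + S $$ (n,n) * X $$ (n,n))" by simp
  also have "(\<Sum>k<n. S $$ (n,k) * X $$ (k,n)) = (\<Sum>k<n. S $$ (k,n) * X $$ (k,n))"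
    using Ss by (intro sum.cong) auto
  finally show ?thesis by (simp add: sum.distrib algebra_simps)
qed

lemma qf_scale: "qf n A (\<lambda>i. c * u i) = c^2 * qf n A u"
  by (simp add: qf_def sum_distrib_left power2_eq_square ac_simps)

lemma mv_smult: "A \<in> carrier_mat n n \<Longrightarrow> i < n \<Longrightarrow> mv n (c \<cdot>\<^sub>m A) g i = c * mv n A g i"
  by (simp add: mv_def sum_distrib_left ac_simps)

lemma mv_scale: "mv n A (\<lambda>j. c * g j) i = c * mv n A g i"
  by (simp add: mv_def sum_distrib_left ac_simps)

lemma inner:
  fixes nn :: "'k \<Rightarrow> nat" and A :: "(nat \<times> nat) \<Rightarrow> real"
  assumes Sgpd: "pos_def_mat (Suc n) Sg" and Sc: "S \<in> carrier_mat (Suc n) (Suc n)" and SSg: "S * Sg = 1\<^sub>m (Suc n)"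
    and fin: "finite I" and nn: "\<forall>i\<in>I. nn i \<le> Suc n"
    and apos: "\<beta> + (\<Sum>i\<in>{i\<in>I. Suc n \<le> nn i}. \<nu> i) - real n / 2 > 0"
    and Asp: "A \<in> space (sym_lebesgue n)"
  shows "(\<integral>\<^sup>+b. (\<integral>\<^sup>+t. ennreal (wint (Suc n) S \<beta> nn \<nu> I (mk n A b t)) \<partial>lborel) \<partial>PiM (Jn n) (\<lambda>_. lborel))
    = ennreal (Gamma (\<beta> + (\<Sum>i\<in>{i\<in>I. Suc n \<le> nn i}. \<nu> i) - real n / 2) * pi powr (real n / 2)
        / S $$ (n,n) powr (\<beta> + (\<Sum>i\<in>{i\<in>I. Suc n \<le> nn i}. \<nu> i)) * wint n (schur n S) \<beta> (\<lambda>i. min (nn i) n) \<nu> I A)"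
proof -
  define T where "T = (\<Sum>i\<in>{i\<in>I. Suc n \<le> nn i}. \<nu> i)"
  define a where "a = \<beta> + T - real n / 2"
  define q where "q = S $$ (n,n)"
  define Am where "Am = sym_of n A"
  define nn' where "nn' i = min (nn i) n" for i
  have q: "q > 0" using Snn[OF Sgpd Sc SSg] by (simp add: q_def)
  have a: "a > 0" using apos by (simp add: a_def T_def)
  have Amc: "Am \<in> carrier_mat n n" by (simp add: Am_def)
  show ?thesis
  proof (cases "pos_def_mat n Am")
    case False
    have "wint (Suc n) S \<beta> nn \<nu> I (mk n A b t) = 0" for b t
    proof -
      have "mk n A b t \<notin> spd_set (Suc n)"
      proof
        assume "mk n A b t \<in> spd_set (Suc n)"
        hence "pos_def_mat (Suc n) (sym_of (Suc n) (mk n A b t))" by (simp add: spd_set_def)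
        from pd_sub[OF this, of n] have "pos_def_mat n Am" by (simp add: mk_lead Am_def)
        with False show False by simp
      qed
      thus ?thesis by (simp add: wint_def)
    qed
    moreover have "wint n (schur n S) \<beta> (\<lambda>i. min (nn i) n) \<nu> I A = 0"
      using False by (simp add: wint_def spd_set_def Am_def)
    ultimately show ?thesis by simp
  next
    case True
    have Asp': "A \<in> spd_set n" using True Asp by (simp add: spd_set_def Am_def)
    have dAm: "det Am > 0" using pd_det_pos[OF True] .
    have d0: "det Am \<noteq> 0" using dAm by simp
    define Ai where "Ai = inv_mat Am"
    have Ai: "Ai \<in> carrier_mat n n" "Am * Ai = 1\<^sub>m n" "Ai * Am = 1\<^sub>m n"
      using inv_props[OF Amc d0] by (auto simp: Ai_def)
    have Aipd: "pos_def_mat n Ai" by (rule inv_pd[OF True Ai(1) Ai(3)])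
    have Asym: "Am $$ (i,j) = Am $$ (j,i)" if "i<n" "j<n" for i j using pd_sym[OF True that] .
    define s where "s i = S $$ (i,n)" for i
    define trA where "trA = (\<Sum>i<n. \<Sum>k<n. S $$ (i,k) * Am $$ (k,i))"
    define PA where "PA = (\<Prod>i\<in>I. det (lead_submat (nn' i) Am) powr \<nu> i)"
    define C0 where "C0 = PA * det Am powr (\<beta> - (real n + 2) / 2)"
    define r where "r b = qf n Ai (\<lambda>i. b (i,n))" for b :: "nat \<times> nat \<Rightarrow> real"
    define lin where "lin b = (\<Sum>i<n. s i * b (i,n))" for b :: "nat \<times> nat \<Rightarrow> real"
    have Ss: "\<And>k. k < n \<Longrightarrow> S $$ (n,k) = S $$ (k,n)" using S_sym[OF Sgpd Sc SSg] by simp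
    have C0nn: "C0 \<ge> 0" by (simp add: C0_def PA_def prod_nonneg)
    have claim1: "wint (Suc n) S \<beta> nn \<nu> I (mk n A b t) = C0 * exp (- (trA + 2 * lin b + q * r b)) *
        (indicator {r b<..} t * (t - r b) powr (a - 1) * exp (- q * (t - r b)))" for b t
    proof -
      define X where "X = sym_of (Suc n) (mk n A b t)"
      have Xc: "X \<in> carrier_mat (Suc n) (Suc n)" by (simp add: X_def)
      have Xt: "transpose_mat X = X" by (simp add: X_def sym_of_transpose)
      have XA: "lead_submat n X = Am" by (simp add: X_def Am_def mk_lead)
      have XAe: "X $$ (k,i) = Am $$ (k,i)" if "k < n" "i < n" for k i
        using that XA by (metis lead_submat_index)
      have AAi: "lead_submat n X * Ai = 1\<^sub>m n" using XA Ai by simp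
      have ccX: "cc n X Ai = t - r b"
      proof -
        have sr: "(\<Sum>i<n. \<Sum>j<n. X $$ (n,i) * Ai $$ (i,j) * X $$ (j,n)) = r b"
          unfolding r_def qf_def by (intro sum.cong refl) (simp add: X_def mk_row mk_col ac_simps)
        have "cc n X Ai = X $$ (n,n) - (\<Sum>i<n. \<Sum>j<n. X $$ (n,i) * Ai $$ (i,j) * X $$ (j,n))"
          by (rule cc_def[OF Xc Xt Ai(1) AAi])
        also have "X $$ (n,n) = t" by (simp add: X_def mk_nn)
        finally show ?thesis unfolding sr .
      qed
      have pdX: "pos_def_mat (Suc n) X \<longleftrightarrow> r b < t" using pd_block[OF Xc Xt Ai(1) AAi] XA True ccX by simp
      have detX: "det X = det Am * (t - r b)" using det_block'[OF Xc Xt Ai(1) AAi] XA ccX by simp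
      have trX: "mat_trace (S * X) = trA + 2 * lin b + q * t"
      proof -
        have "mat_trace (S * X) = (\<Sum>i<n. \<Sum>k<n. S $$ (i,k) * X $$ (k,i))
           + (\<Sum>i<n. S $$ (i,n) * (X $$ (n,i) + X $$ (i,n))) + S $$ (n,n) * X $$ (n,n)"
          by (rule trace_Suc[OF Sc Xc Ss])
        also have "(\<Sum>i<n. \<Sum>k<n. S $$ (i,k) * X $$ (k,i)) = trA"
          unfolding trA_def by (intro sum.cong refl) (simp add: XAe)
        also have "(\<Sum>i<n. S $$ (i,n) * (X $$ (n,i) + X $$ (i,n))) = 2 * lin b"
          unfolding lin_def sum_distrib_left by (intro sum.cong refl) (simp add: X_def mk_row mk_col s_def)
        finally show ?thesis by (simp add: X_def mk_nn q_def)
      qed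
      show ?thesis
      proof (cases "r b < t")
        case False
        hence "mk n A b t \<notin> spd_set (Suc n)" using pdX by (simp add: spd_set_def X_def)
        thus ?thesis using False by (simp add: wint_def indicator_def)
      next
        case True
        have sp: "mk n A b t \<in> spd_set (Suc n)" using pdX True mk_space by (simp add: spd_set_def X_def)
        have tr: "t - r b > 0" using True by simp
        have lead_i: "det (lead_submat (nn i) X) powr \<nu> i = det (lead_submat (nn' i) Am) powr \<nu> i *
            (if Suc n \<le> nn i then (t - r b) powr \<nu> i else 1)" if i: "i \<in> I" for i
        proof (cases "Suc n \<le> nn i")
          case True
          hence "nn i = Suc n" "nn' i = n" using nn i by (auto simp: nn'_def)
          thus ?thesis using detX lead_submat_full[OF Xc] lead_submat_full[OF Amc] True by (simp add: powr_mult)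
        next
          case False
          hence "nn' i = nn i" "nn i \<le> n" by (auto simp: nn'_def)
          thus ?thesis using False lead_submat_lead_submat[of "nn i" n X] XA by simp
        qed
        have prodI: "(\<Prod>i\<in>I. det (lead_submat (nn i) X) powr \<nu> i) = PA * (t - r b) powr T"
        proof -
          have "(\<Prod>i\<in>I. det (lead_submat (nn i) X) powr \<nu> i) =
              (\<Prod>i\<in>I. det (lead_submat (nn' i) Am) powr \<nu> i * (if Suc n \<le> nn i then (t - r b) powr \<nu> i else 1))"
            by (rule prod.cong) (simp_all add: lead_i)
          also have "\<dots> = PA * (\<Prod>i\<in>I. if Suc n \<le> nn i then (t - r b) powr \<nu> i else 1)"
            by (simp add: prod.distrib PA_def)
          also have "(\<Prod>i\<in>I. if Suc n \<le> nn i then (t - r b) powr \<nu> i else 1) = (\<Prod>i\<in>{i\<in>I. Suc n \<le> nn i}. (t - r b) powr \<nu> i)"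
            by (simp add: prod.inter_filter fin)
          also have "\<dots> = (t - r b) powr T" using tr by (simp add: T_def powr_sum)
          finally show ?thesis .
        qed
        have "wint (Suc n) S \<beta> nn \<nu> I (mk n A b t) = PA * (t - r b) powr T *
            (det Am * (t - r b)) powr (\<beta> - (real (Suc n) + 1) / 2) * exp (- (trA + 2 * lin b + q * t))"
          using sp by (simp add: wint_def X_def[symmetric] prodI detX trX)
        also have "\<dots> = C0 * exp (- (trA + 2 * lin b + q * r b)) * ((t - r b) powr (a - 1) * exp (- q * (t - r b)))"
        proof -
          have e1: "(t - r b) powr T * (t - r b) powr (\<beta> - (real (Suc n) + 1) / 2) = (t - r b) powr (a - 1)"
          proof -
            have "T + (\<beta> - (real (Suc n) + 1) / 2) = a - 1" by (simp add: a_def field_simps)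
            thus ?thesis by (simp add: powr_add[symmetric])
          qed
          have e2: "exp (- (trA + 2 * lin b + q * t)) = exp (- (trA + 2 * lin b + q * r b)) * exp (- q * (t - r b))"
            by (simp add: exp_add[symmetric] algebra_simps)
          have "PA * (t - r b) powr T * (det Am * (t - r b)) powr (\<beta> - (real (Suc n) + 1) / 2) * exp (- (trA + 2 * lin b + q * t))
             = PA * det Am powr (\<beta> - (real (Suc n) + 1) / 2) * ((t - r b) powr T * (t - r b) powr (\<beta> - (real (Suc n) + 1) / 2))
               * exp (- (trA + 2 * lin b + q * t))"
            unfolding powr_mult by (simp only: mult_ac)
          also have "\<dots> = C0 * exp (- (trA + 2 * lin b + q * r b)) * ((t - r b) powr (a - 1) * exp (- q * (t - r b)))"
          proof -
            have ee: "\<beta> - (real (Suc n) + 1) / 2 = \<beta> - (real n + 2) / 2" by simp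
            show ?thesis unfolding e1 e2 unfolding C0_def ee by (simp only: mult_ac)
          qed
          finally show ?thesis .
        qed
        finally show ?thesis using True by simp
      qed
    qed
    have tint: "(\<integral>\<^sup>+t. ennreal (wint (Suc n) S \<beta> nn \<nu> I (mk n A b t)) \<partial>lborel) =
        ennreal (C0 * exp (- (trA + 2 * lin b + q * r b)) * (Gamma a / q powr a))" for b
    proof -
      have nn0: "0 \<le> C0 * exp (- (trA + 2 * lin b + q * r b))" using C0nn by simp
      have "(\<integral>\<^sup>+t. ennreal (wint (Suc n) S \<beta> nn \<nu> I (mk n A b t)) \<partial>lborel) =
          (\<integral>\<^sup>+t. ennreal (C0 * exp (- (trA + 2 * lin b + q * r b))) *
             ennreal (indicator {r b<..} t * (t - r b) powr (a - 1) * exp (- q * (t - r b))) \<partial>lborel)"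
        by (intro nn_integral_cong) (simp only: claim1 ennreal_mult'[OF nn0])
      also have "\<dots> = ennreal (C0 * exp (- (trA + 2 * lin b + q * r b))) *
          (\<integral>\<^sup>+t. ennreal (indicator {r b<..} t * (t - r b) powr (a - 1) * exp (- q * (t - r b))) \<partial>lborel)"
        by (rule nn_integral_cmult) measurable
      also have "\<dots> = ennreal (C0 * exp (- (trA + 2 * lin b + q * r b))) * ennreal (Gamma a / q powr a)"
        by (simp only: gamma_shift[OF q a])
      finally show ?thesis by (simp only: ennreal_mult'[OF nn0])
    qed
    define Q where "Q = q \<cdot>\<^sub>m Ai"
    define g where "g i = (- 1 / q) * mv n Am s i" for i
    have Qpd: "pos_def_mat n Q" using pd_smult[OF Aipd q] by (simp add: Q_def)
    have mvQ: "mv n Q g i = - s i" if i: "i < n" for i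
    proof -
      have "mv n Q g i = q * mv n Ai g i" using mv_smult[OF Ai(1) i] by (simp add: Q_def)
      also have "mv n Ai g i = (- 1 / q) * mv n Ai (mv n Am s) i"
        unfolding g_def by (rule mv_scale)
      also have "mv n Ai (mv n Am s) i = s i" using mv_mult[OF Ai(1) Amc i] Ai(3) mv_one[OF i] by simp
      finally show ?thesis using q by simp
    qed
    have qfg: "qf n Q g = qf n Am s / q"
    proof -
      have "qf n Q g = q * qf n Ai g" using qf_smult[OF Ai(1)] by (simp add: Q_def)
      also have "qf n Ai g = (- 1 / q)^2 * qf n Ai (mv n Am s)" unfolding g_def by (rule qf_scale)
      also have "qf n Ai (mv n Am s) = qf n Am s"
      proof -
        have "qf n Ai (mv n Am s) = (\<Sum>i<n. mv n Am s i * mv n Ai (mv n Am s) i)" by (rule qf_mv)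
        also have "\<dots> = (\<Sum>i<n. mv n Am s i * s i)"
          using mv_mult[OF Ai(1) Amc] Ai(3) mv_one by (auto intro!: sum.cong)
        also have "\<dots> = qf n Am s" by (simp add: qf_mv mult.commute)
        finally show ?thesis .
      qed
      finally show ?thesis using q by (simp add: power2_eq_square field_simps)
    qed
    have detQ: "det Q = q ^ n / det Am"
    proof -
      have "det Ai * det Am = 1" using det_mult[OF Ai(1) Amc] Ai(3) by simp
      hence "det Ai = 1 / det Am" using d0 by (simp add: field_simps)
      thus ?thesis using Ai(1) by (simp add: Q_def)
    qed
    define E where "E b = - qf n Q (\<lambda>i. b ((\<lambda>i. (i,n)) i)) + 2 * (\<Sum>i<n. mv n Q g i * b ((\<lambda>i. (i,n)) i))"
      for b :: "nat \<times> nat \<Rightarrow> real"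
    have expo: "exp (- (trA + 2 * lin b + q * r b)) = exp (- trA) * exp (E b)" for b
    proof -
      have "(\<Sum>i<n. mv n Q g i * b (i,n)) = - lin b"
        unfolding lin_def sum_negf[symmetric] by (intro sum.cong refl) (simp add: mvQ)
      moreover have "qf n Q (\<lambda>i. b (i,n)) = q * r b" using qf_smult[OF Ai(1)] by (simp add: Q_def r_def)
      ultimately have "E b = - (2 * lin b + q * r b)" by (simp add: E_def)
      thus ?thesis by (simp add: exp_add[symmetric])
    qed
    have inj: "inj (\<lambda>i::nat. (i,n))" by (auto simp: inj_def)
    define K0 where "K0 = C0 * exp (- trA) * (Gamma a / q powr a)"
    have K0nn: "K0 \<ge> 0" using C0nn a q by (simp add: K0_def Gamma_real_pos less_imp_le)
    have Em: "(\<lambda>b. ennreal (exp (E b))) \<in> borel_measurable (PiM (Jn n) (\<lambda>_. lborel))"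
    proof -
      have comp: "(\<lambda>y. y ((\<lambda>i. (i,n)) i)) \<in> borel_measurable (PiM (Jn n) (\<lambda>_. lborel))" if "i < n" for i
        using measurable_component_singleton[of "(i,n)" "Jn n" "\<lambda>_. lborel"] that by (simp add: Jn_def)
      have [measurable]: "(\<lambda>y. qf n Q (\<lambda>i. y ((\<lambda>i. (i,n)) i))) \<in> borel_measurable (PiM (Jn n) (\<lambda>_. lborel))"
        by (rule meas_qf, rule comp)
      have [measurable]: "(\<lambda>y. (\<Sum>i<n. mv n Q g i * y ((\<lambda>i. (i,n)) i))) \<in> borel_measurable (PiM (Jn n) (\<lambda>_. lborel))"
        by (rule meas_lin, rule comp)
      show ?thesis unfolding E_def by measurable
    qed
    have "(\<integral>\<^sup>+b. (\<integral>\<^sup>+t. ennreal (wint (Suc n) S \<beta> nn \<nu> I (mk n A b t)) \<partial>lborel) \<partial>PiM (Jn n) (\<lambda>_. lborel))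
        = (\<integral>\<^sup>+b. ennreal K0 * ennreal (exp (E b)) \<partial>PiM (Jn n) (\<lambda>_. lborel))"
    proof (intro nn_integral_cong)
      fix b :: "nat \<times> nat \<Rightarrow> real"
      have "C0 * exp (- (trA + 2 * lin b + q * r b)) * (Gamma a / q powr a) = K0 * exp (E b)"
        unfolding K0_def expo by (simp only: mult_ac)
      thus "(\<integral>\<^sup>+t. ennreal (wint (Suc n) S \<beta> nn \<nu> I (mk n A b t)) \<partial>lborel) = ennreal K0 * ennreal (exp (E b))"
        by (simp add: tint ennreal_mult'[OF K0nn])
    qed
    also have "\<dots> = ennreal K0 * (\<integral>\<^sup>+b. ennreal (exp (E b)) \<partial>PiM (Jn n) (\<lambda>_. lborel))"
      by (rule nn_integral_cmult[OF Em])
    also have "(\<integral>\<^sup>+b. ennreal (exp (E b)) \<partial>PiM (Jn n) (\<lambda>_. lborel)) =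
        ennreal (pi powr (real n / 2) / sqrt (det Q) * exp (qf n Q g))"
      unfolding E_def Jn_def by (rule gauss[OF inj Qpd])
    finally have L: "(\<integral>\<^sup>+b. (\<integral>\<^sup>+t. ennreal (wint (Suc n) S \<beta> nn \<nu> I (mk n A b t)) \<partial>lborel) \<partial>PiM (Jn n) (\<lambda>_. lborel))
        = ennreal (K0 * (pi powr (real n / 2) / sqrt (det Q) * exp (qf n Q g)))"
      by (simp only: ennreal_mult'[OF K0nn])
    have trS: "mat_trace (schur n S * Am) = trA - qf n Am s / q"
    proof -
      have "mat_trace (schur n S * Am) = (\<Sum>i<n. \<Sum>k<n. schur n S $$ (i,k) * Am $$ (k,i))"
        by (rule trace_mult) (simp_all add: schur_def Amc)
      also have "\<dots> = (\<Sum>i<n. \<Sum>k<n. S $$ (i,k) * Am $$ (k,i) - (Am $$ (i,k) * s i * s k) / q)"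
        by (intro sum.cong refl) (simp add: schur_def s_def q_def Ss Asym field_simps)
      also have "\<dots> = trA - qf n Am s / q"
        by (simp add: trA_def qf_def sum_subtractf sum_divide_distrib)
      finally show ?thesis .
    qed
    have W: "wint n (schur n S) \<beta> (\<lambda>i. min (nn i) n) \<nu> I A = PA * det Am powr (\<beta> - (real n + 1) / 2) * exp (- trA) * exp (qf n Am s / q)"
      using Asp' by (simp add: wint_def PA_def nn'_def Am_def[symmetric] trS exp_diff exp_minus field_simps)
    have fin_eq: "K0 * (pi powr (real n / 2) / sqrt (det Q) * exp (qf n Q g)) =
        Gamma a * pi powr (real n / 2) / q powr (\<beta> + T) * (PA * det Am powr (\<beta> - (real n + 1) / 2) * exp (- trA) * exp (qf n Am s / q))"
    proof -
      define h where "h = det Am powr (1/2)"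
      have h: "h > 0" using dAm by (simp add: h_def)
      have s1: "sqrt (det Q) = q powr (real n / 2) / h"
        using q dAm by (simp add: detQ h_def real_sqrt_divide powr_half_sqrt[symmetric] powr_realpow[symmetric] powr_powr)
      have s2: "det Am powr (\<beta> - (real n + 2) / 2) = det Am powr (\<beta> - (real n + 1) / 2) / h"
      proof -
        have e: "\<beta> - (real n + 2) / 2 = (\<beta> - (real n + 1) / 2) - 1/2" by (simp add: field_simps)
        show ?thesis unfolding e h_def by (rule powr_diff)
      qed
      have s3: "q powr a = q powr (\<beta> + T) / q powr (real n / 2)"
      proof -
        have "a = (\<beta> + T) - real n / 2" by (simp add: a_def)
        thus ?thesis by (simp add: powr_diff)
      qed
      have qn: "q powr (real n / 2) > 0" "q powr (\<beta> + T) > 0" using q by simp_all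
      show ?thesis unfolding K0_def C0_def s1 s2 s3 qfg using h qn q
        by (simp add: field_simps)
    qed
    show ?thesis unfolding L W[symmetric] fin_eq T_def[symmetric] a_def[symmetric] q_def[symmetric] ..
  qed
qed

lemma wint_0: "wint 0 S \<beta> nn \<nu> I (\<lambda>_. undefined) = 1" if "\<forall>i\<in>I. nn i \<le> 0" "S \<in> carrier_mat 0 0"
proof -
  have sp: "(\<lambda>_. undefined) \<in> spd_set 0"
    by (simp add: spd_set_def sym_lebesgue_def sym_idx_def pd_iff sym_of_transpose)
  have "det (lead_submat (nn i) (sym_of 0 (\<lambda>_. undefined))) = 1" if "i \<in> I" for i
    using \<open>\<forall>i\<in>I. nn i \<le> 0\<close> that by (intro det_0) simp
  moreover have "det (sym_of 0 (\<lambda>_. undefined)) = 1" by (intro det_0) simp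
  moreover have "mat_trace (S * sym_of 0 (\<lambda>_. undefined)) = 0" using that(2) by (simp add: mat_trace_def)
  ultimately show ?thesis using sp by (simp add: wint_def)
qed

lemma wval_0: "pos_def_mat 0 Sg \<Longrightarrow> \<forall>i\<in>I. nn i \<le> 0 \<Longrightarrow> wval 0 Sg \<beta> nn \<nu> I = 1"
proof -
  assume Sg: "pos_def_mat 0 Sg" and nn: "\<forall>i\<in>I. nn i \<le> 0"
  have Sgc: "Sg \<in> carrier_mat 0 0" using Sg by (simp add: pd_iff)
  have "det Sg = 1" by (rule det_0[OF Sgc])
  moreover have "det (lead_submat (nn i) Sg) = 1" if "i \<in> I" for i
    using nn that by (intro det_0) simp
  ultimately show ?thesis by (simp add: wval_def)
qed

lemma wval_step:
  fixes nn :: "'k \<Rightarrow> nat"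
  assumes Sgpd: "pos_def_mat (Suc n) Sg" and Sc: "S \<in> carrier_mat (Suc n) (Suc n)" and SSg: "S * Sg = 1\<^sub>m (Suc n)"
    and fin: "finite I" and nn: "\<forall>i\<in>I. nn i \<le> Suc n"
  shows "wval (Suc n) Sg \<beta> nn \<nu> I =
    Gamma (\<beta> + (\<Sum>i\<in>{i\<in>I. Suc n \<le> nn i}. \<nu> i) - real n / 2) * pi powr (real n / 2)
        / S $$ (n,n) powr (\<beta> + (\<Sum>i\<in>{i\<in>I. Suc n \<le> nn i}. \<nu> i)) *
    wval n (lead_submat n Sg) \<beta> (\<lambda>i. min (nn i) n) \<nu> I"
proof -
  define T where "T = (\<Sum>i\<in>{i\<in>I. Suc n \<le> nn i}. \<nu> i)"
  define q where "q = S $$ (n,n)"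
  define Sg' where "Sg' = lead_submat n Sg"
  define nn' where "nn' = (\<lambda>i. min (nn i) n)"
  define G where "G m = Gamma (\<beta> + (\<Sum>i\<in>{i\<in>I. m \<le> nn i}. \<nu> i) - (real m - 1) / 2)" for m
  have q: "q > 0" using Snn[OF Sgpd Sc SSg] by (simp add: q_def)
  have Sg'pd: "pos_def_mat n Sg'" using pd_sub[OF Sgpd, of n] by (simp add: Sg'_def)
  have Sg'c: "Sg' \<in> carrier_mat n n" by (simp add: Sg'_def)
  have dSg: "det Sg = det Sg' / q" using det_Sg[OF Sgpd Sc SSg] by (simp add: Sg'_def q_def)
  have Sgc: "Sg \<in> carrier_mat (Suc n) (Suc n)" using Sgpd by (simp add: pd_iff)
  have G': "(\<Prod>m=1..n. Gamma (\<beta> + (\<Sum>i\<in>{i\<in>I. m \<le> nn' i}. \<nu> i) - (real m - 1) / 2)) = (\<Prod>m=1..n. G m)"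
  proof (rule prod.cong)
    fix m assume "m \<in> {1..n}"
    hence "{i\<in>I. m \<le> nn' i} = {i\<in>I. m \<le> nn i}" by (auto simp: nn'_def)
    thus "Gamma (\<beta> + (\<Sum>i\<in>{i\<in>I. m \<le> nn' i}. \<nu> i) - (real m - 1) / 2) = G m" by (simp add: G_def)
  qed simp
  have GS: "(\<Prod>m=1..Suc n. G m) = (\<Prod>m=1..n. G m) * Gamma (\<beta> + T - real n / 2)"
    by (simp add: G_def T_def)
  have leadi: "det (lead_submat (nn i) Sg) powr \<nu> i =
      det (lead_submat (nn' i) Sg') powr \<nu> i / (if Suc n \<le> nn i then q powr \<nu> i else 1)" if i: "i \<in> I" for i
  proof (cases "Suc n \<le> nn i")
    case True
    hence "nn i = Suc n" "nn' i = n" using nn i by (auto simp: nn'_def)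
    thus ?thesis using True dSg lead_submat_full[OF Sgc] lead_submat_full[OF Sg'c] by (simp add: powr_divide)
  next
    case False
    hence "nn' i = nn i" "nn i \<le> n" by (auto simp: nn'_def)
    thus ?thesis using False lead_submat_lead_submat[of "nn i" n Sg] by (simp add: Sg'_def)
  qed
  have PI: "(\<Prod>i\<in>I. det (lead_submat (nn i) Sg) powr \<nu> i) = (\<Prod>i\<in>I. det (lead_submat (nn' i) Sg') powr \<nu> i) / q powr T"
  proof -
    have "(\<Prod>i\<in>I. det (lead_submat (nn i) Sg) powr \<nu> i) =
        (\<Prod>i\<in>I. det (lead_submat (nn' i) Sg') powr \<nu> i / (if Suc n \<le> nn i then q powr \<nu> i else 1))"
      by (rule prod.cong) (simp_all add: leadi)
    also have "\<dots> = (\<Prod>i\<in>I. det (lead_submat (nn' i) Sg') powr \<nu> i) / (\<Prod>i\<in>I. if Suc n \<le> nn i then q powr \<nu> i else 1)"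
      by (rule prod_dividef)
    also have "(\<Prod>i\<in>I. if Suc n \<le> nn i then q powr \<nu> i else 1) = (\<Prod>i\<in>{i\<in>I. Suc n \<le> nn i}. q powr \<nu> i)"
      by (simp add: prod.inter_filter fin)
    also have "\<dots> = q powr T" using q by (simp add: T_def powr_sum)
    finally show ?thesis .
  qed
  have pi_eq: "pi powr (real (Suc n) * (real (Suc n) - 1) / 4) = pi powr (real n / 2) * pi powr (real n * (real n - 1) / 4)"
  proof -
    have e: "real (Suc n) * (real (Suc n) - 1) / 4 = real n / 2 + real n * (real n - 1) / 4" by (simp add: field_simps)
    show ?thesis unfolding e by (rule powr_add)
  qed
  have qq: "q powr \<beta> * q powr T = q powr (\<beta> + T)" by (simp add: powr_add)
  have "wval (Suc n) Sg \<beta> nn \<nu> I = pi powr (real n / 2) * pi powr (real n * (real n - 1) / 4) *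
      ((\<Prod>m=1..n. G m) * Gamma (\<beta> + T - real n / 2)) * ((det Sg' / q) powr \<beta>) *
      ((\<Prod>i\<in>I. det (lead_submat (nn' i) Sg') powr \<nu> i) / q powr T)"
    unfolding wval_def pi_eq PI dSg[symmetric] GS[symmetric] G_def by (simp add: T_def)
  also have "\<dots> = Gamma (\<beta> + T - real n / 2) * pi powr (real n / 2) / (q powr \<beta> * q powr T) *
      (pi powr (real n * (real n - 1) / 4) * (\<Prod>m=1..n. G m) * det Sg' powr \<beta> *
       (\<Prod>i\<in>I. det (lead_submat (nn' i) Sg') powr \<nu> i))"
    using q by (simp add: powr_divide field_simps)
  also have "\<dots> = Gamma (\<beta> + T - real n / 2) * pi powr (real n / 2) / q powr (\<beta> + T) *
      wval n Sg' \<beta> nn' \<nu> I"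
    unfolding qq wval_def G' by simp
  finally show ?thesis by (simp add: T_def q_def Sg'_def nn'_def)
qed

theorem core:
  fixes nn :: "'k \<Rightarrow> nat" and \<nu> :: "'k \<Rightarrow> real" and I :: "'k set"
  assumes fin: "finite I"
  shows "pos_def_mat p Sg \<Longrightarrow> S \<in> carrier_mat p p \<Longrightarrow> S * Sg = 1\<^sub>m p \<Longrightarrow> (\<forall>i\<in>I. nn i \<le> p) \<Longrightarrow>
    (\<forall>m\<in>{1..p}. \<beta> + (\<Sum>i\<in>{i\<in>I. m \<le> nn i}. \<nu> i) > (real m - 1) / 2) \<Longrightarrow>
    (\<integral>\<^sup>+x. ennreal (wint p S \<beta> nn \<nu> I x) \<partial>sym_lebesgue p) = ennreal (wval p Sg \<beta> nn \<nu> I)"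
proof (induction p arbitrary: Sg S nn)
  case 0
  interpret product_sigma_finite "\<lambda>_::nat\<times>nat. lborel::real measure" by standard
  have e: "sym_lebesgue 0 = PiM {} (\<lambda>_. lborel)" by (simp add: sym_lebesgue_def sym_idx_def)
  have w: "wint 0 S \<beta> nn \<nu> I (\<lambda>_. undefined) = 1" by (rule wint_0) (use "0.prems" in auto)
  have v: "wval 0 Sg \<beta> nn \<nu> I = 1" using wval_0 "0.prems" by auto
  show ?case unfolding e
    by (subst nn_integral_empty) (simp_all add: w v)
next
  case (Suc n)
  define nn' where "nn' = (\<lambda>i. min (nn i) n)"
  define T where "T = (\<Sum>i\<in>{i\<in>I. Suc n \<le> nn i}. \<nu> i)"
  define K where "K = Gamma (\<beta> + T - real n / 2) * pi powr (real n / 2) / S $$ (n,n) powr (\<beta> + T)"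
  have Sgpd: "pos_def_mat (Suc n) Sg" and Sc: "S \<in> carrier_mat (Suc n) (Suc n)"
    and SSg: "S * Sg = 1\<^sub>m (Suc n)" and nn: "\<forall>i\<in>I. nn i \<le> Suc n" using Suc.prems by auto
  have q: "S $$ (n,n) > 0" using Snn[OF Sgpd Sc SSg] .
  have apos: "\<beta> + T - real n / 2 > 0"
    using Suc.prems(5) by (auto simp: T_def dest!: bspec[of _ _ "Suc n"])
  have Knn: "K \<ge> 0" using apos q by (simp add: K_def Gamma_real_pos less_imp_le)
  have IH: "(\<integral>\<^sup>+x. ennreal (wint n (schur n S) \<beta> nn' \<nu> I x) \<partial>sym_lebesgue n) =
      ennreal (wval n (lead_submat n Sg) \<beta> nn' \<nu> I)"
  proof (rule Suc.IH)
    show "pos_def_mat n (lead_submat n Sg)" using pd_sub[OF Sgpd, of n] by simp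
    show "schur n S \<in> carrier_mat n n" by (simp add: schur_def)
    show "schur n S * lead_submat n Sg = 1\<^sub>m n" by (rule schur_inv[OF Sgpd Sc SSg])
    show "\<forall>i\<in>I. nn' i \<le> n" by (simp add: nn'_def)
    show "\<forall>m\<in>{1..n}. (real m - 1) / 2 < \<beta> + (\<Sum>i\<in>{i\<in>I. m \<le> nn' i}. \<nu> i)"
    proof
      fix m assume m: "m \<in> {1..n}"
      hence "{i\<in>I. m \<le> nn' i} = {i\<in>I. m \<le> nn i}" by (auto simp: nn'_def)
      thus "(real m - 1) / 2 < \<beta> + (\<Sum>i\<in>{i\<in>I. m \<le> nn' i}. \<nu> i)" using Suc.prems(5) m by auto
    qed
  qed
  have "(\<integral>\<^sup>+x. ennreal (wint (Suc n) S \<beta> nn \<nu> I x) \<partial>sym_lebesgue (Suc n)) =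
      (\<integral>\<^sup>+A. (\<integral>\<^sup>+b. (\<integral>\<^sup>+t. ennreal (wint (Suc n) S \<beta> nn \<nu> I (mk n A b t)) \<partial>lborel)
          \<partial>PiM (Jn n) (\<lambda>_. lborel)) \<partial>sym_lebesgue n)"
    by (rule decomp) (use wint_meas[OF Sc nn] in measurable)
  also have "\<dots> = (\<integral>\<^sup>+A. ennreal K * ennreal (wint n (schur n S) \<beta> nn' \<nu> I A) \<partial>sym_lebesgue n)"
  proof (intro nn_integral_cong)
    fix A assume A: "A \<in> space (sym_lebesgue n)"
    show "(\<integral>\<^sup>+b. (\<integral>\<^sup>+t. ennreal (wint (Suc n) S \<beta> nn \<nu> I (mk n A b t)) \<partial>lborel) \<partial>PiM (Jn n) (\<lambda>_. lborel))
        = ennreal K * ennreal (wint n (schur n S) \<beta> nn' \<nu> I A)"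
      using inner[OF Sgpd Sc SSg fin nn _ A, of \<beta> \<nu>] apos Knn
      by (simp add: K_def T_def nn'_def ennreal_mult'[symmetric])
  qed
  also have "\<dots> = ennreal K * (\<integral>\<^sup>+A. ennreal (wint n (schur n S) \<beta> nn' \<nu> I A) \<partial>sym_lebesgue n)"
  proof (rule nn_integral_cmult)
    have "wint n (schur n S) \<beta> nn' \<nu> I \<in> borel_measurable (sym_lebesgue n)"
      by (rule wint_meas) (simp_all add: schur_def nn'_def)
    thus "(\<lambda>A. ennreal (wint n (schur n S) \<beta> nn' \<nu> I A)) \<in> borel_measurable (sym_lebesgue n)" by measurable
  qed
  also have "\<dots> = ennreal (K * wval n (lead_submat n Sg) \<beta> nn' \<nu> I)"
    unfolding IH using Knn by (simp add: ennreal_mult')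
  also have "K * wval n (lead_submat n Sg) \<beta> nn' \<nu> I = wval (Suc n) Sg \<beta> nn \<nu> I"
    using wval_step[OF Sgpd Sc SSg fin nn, of \<beta> \<nu>] by (simp add: K_def T_def nn'_def)
  finally show ?case .
qed

lemma pd_one: "pos_def_mat m (1\<^sub>m m)"
  unfolding pd_iff
proof (intro conjI allI impI)
  fix v :: "nat \<Rightarrow> real" assume "\<exists>i<m. v i \<noteq> 0"
  then obtain i where i: "i < m" "v i \<noteq> 0" by auto
  have "qf m (1\<^sub>m m) v = (\<Sum>j<m. v j * v j)" by (simp add: qf_mv mv_one)
  also have "\<dots> \<ge> v i * v i" using i by (intro member_le_sum) auto
  finally show "qf m (1\<^sub>m m) v > 0" using i(2) by (meson less_le_trans not_real_square_gt_zero)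
qed simp_all

lemma wval_nonneg:
  assumes "\<forall>m\<in>{1..p}. \<beta> + (\<Sum>i\<in>{i\<in>I. m \<le> nn i}. \<nu> i) > (real m - 1) / 2"
  shows "wval p Sg \<beta> nn \<nu> I \<ge> 0"
proof -
  have "(\<Prod>m=1..p. Gamma (\<beta> + (\<Sum>i\<in>{i\<in>I. m \<le> nn i}. \<nu> i) - (real m - 1) / 2)) \<ge> 0"
    using assms by (intro prod_nonneg) (auto intro!: less_imp_le Gamma_real_pos)
  thus ?thesis by (auto simp: wval_def intro!: mult_nonneg_nonneg prod_nonneg)
qed

lemma trace_uminus: "X \<in> carrier_mat m m \<Longrightarrow> mat_trace (- X) = - mat_trace X"
  by (simp add: mat_trace_def sum_negf)

lemma multigamma_eq:
  assumes g: "\<gamma> > (real m - 1) / 2"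
  shows "multigamma m \<gamma> = pi powr (real m * (real m - 1) / 4) * (\<Prod>k=1..m. Gamma (\<gamma> - (real k - 1) / 2))"
proof -
  have cond: "\<forall>k\<in>{1..m}. \<gamma> + (\<Sum>i\<in>{i\<in>({}::nat set). k \<le> (\<lambda>_. 0) i}. (\<lambda>_. 0::real) i) > (real k - 1) / 2"
    using g by auto
  have C: "(\<integral>\<^sup>+x. ennreal (wint m (1\<^sub>m m) \<gamma> (\<lambda>_::nat. 0) (\<lambda>_. 0) {} x) \<partial>sym_lebesgue m)
      = ennreal (wval m (1\<^sub>m m) \<gamma> (\<lambda>_::nat. 0) (\<lambda>_. 0) {})"
    by (rule core) (use cond in \<open>simp_all add: pd_one\<close>)
  have eqf: "(\<lambda>x. indicator (spd_set m) x * (det (sym_of m x) powr (\<gamma> - (real m + 1) / 2) * etr (- sym_of m x)))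
      = wint m (1\<^sub>m m) \<gamma> (\<lambda>_::nat. 0) (\<lambda>_. 0) {}"
    by (rule ext) (simp add: wint_def etr_def trace_uminus[OF sym_of_carrier] left_mult_one_mat[OF sym_of_carrier])
  have "multigamma m \<gamma> = integral\<^sup>L (sym_lebesgue m) (wint m (1\<^sub>m m) \<gamma> (\<lambda>_::nat. 0) (\<lambda>_. 0) {})"
    unfolding multigamma_def eqf ..
  also have "\<dots> = enn2real (\<integral>\<^sup>+x. ennreal (wint m (1\<^sub>m m) \<gamma> (\<lambda>_::nat. 0) (\<lambda>_. 0) {} x) \<partial>sym_lebesgue m)"
    by (rule integral_eq_nn_integral) (simp_all add: wint_meas wint_nonneg)
  also have "\<dots> = wval m (1\<^sub>m m) \<gamma> (\<lambda>_::nat. 0) (\<lambda>_. 0) {}"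
    unfolding C using wval_nonneg[OF cond] by simp
  also have "\<dots> = pi powr (real m * (real m - 1) / 4) * (\<Prod>k=1..m. Gamma (\<gamma> - (real k - 1) / 2))"
    by (simp add: wval_def)
  finally show ?thesis .
qed

lemma regroup:
  fixes F :: "nat \<Rightarrow> real" and d :: nat and ps :: "nat \<Rightarrow> nat"
  shows "(\<Prod>m=1..(\<Sum>k=1..d. ps k). F m) = (\<Prod>i=1..d. \<Prod>j=1..ps i. F ((\<Sum>k=1..<i. ps k) + j))"
proof (induction d)
  case 0
  show ?case by simp
next
  case (Suc d)
  define N where "N = (\<Sum>k=1..d. ps k)"
  have sN: "(\<Sum>k=1..Suc d. ps k) = N + ps (Suc d)" by (simp add: N_def)
  have "(\<Prod>m=1..N + ps (Suc d). F m) = (\<Prod>m=1..N. F m) * (\<Prod>m=N + 1..N + ps (Suc d). F m)"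
    by (rule prod.ub_add_nat) simp
  also have "(\<Prod>m=N + 1..N + ps (Suc d). F m) = (\<Prod>j=1..ps (Suc d). F (N + j))"
    using prod.shift_bounds_cl_nat_ivl[of F 1 N "ps (Suc d)"] by (simp add: add.commute)
  also have "(\<Prod>m=1..N. F m) = (\<Prod>i=1..d. \<Prod>j=1..ps i. F ((\<Sum>k=1..<i. ps k) + j))"
    using Suc.IH by (simp add: N_def)
  finally show ?case
    by (simp add: sN N_def atLeastLessThanSuc_atLeastAtMost)
qed

lemma psum_mono:
  fixes ps :: "nat \<Rightarrow> nat" and i k :: nat
  shows "i \<le> k \<Longrightarrow> (\<Sum>l=1..i. ps l) \<le> (\<Sum>l=1..k. ps l)"
  by (intro sum_mono2) auto

theorem theorem1:
  fixes d :: nat and ps :: "nat \<Rightarrow> nat" and \<alpha> :: real and \<Sigma> :: "real mat"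
    and M :: "'a measure" and X :: "'a \<Rightarrow> (nat \<times> nat) \<Rightarrow> real" and \<nu> :: "nat \<Rightarrow> real"
  defines "p \<equiv> (\<Sum>k = 1..d. ps k)"
  assumes "prob_space M"
    and "\<alpha> > real p - 1"
    and "pos_def_mat p \<Sigma>"
    and "wishart_distributed M p \<alpha> \<Sigma> X"
    and "\<forall>i \<in> {1..d}. \<nu> i \<ge> 0"
  shows "prob_space.expectation M
           (\<lambda>\<omega>. \<Prod>i = 1..d. det (lead_submat (\<Sum>k = 1..i. ps k) (sym_of p (X \<omega>))) powr \<nu> i)
       = (\<Prod>i = 1..d. det (2 \<cdot>\<^sub>m lead_submat (\<Sum>k = 1..i. ps k) \<Sigma>) powr \<nu> i *
            multigamma (ps i) (\<alpha> / 2 - (\<Sum>k = 1..<i. real (ps k) / 2) + (\<Sum>k = i..d. \<nu> k))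
            / multigamma (ps i) (\<alpha> / 2 - (\<Sum>k = 1..<i. real (ps k) / 2)))"
proof -
  note Mp = assms(2) and alpha = assms(3) and Sgpd = assms(4) and W = assms(5) and nu = assms(6)
  define n where "n i = (\<Sum>k = 1..i. ps k)" for i
  define m0 where "m0 i = (\<Sum>k = 1..<i. ps k)" for i
  define Sg2 where "Sg2 = 2 \<cdot>\<^sub>m \<Sigma>"
  define S where "S = (1/2) \<cdot>\<^sub>m inv_mat \<Sigma>"
  define C where "C = det (2 \<cdot>\<^sub>m \<Sigma>) powr (\<alpha> / 2) * multigamma p (\<alpha> / 2)"
  define g where "g x = (\<Prod>i = 1..d. det (lead_submat (n i) (sym_of p x)) powr \<nu> i)" for x
  define sm where "sm m = (\<Sum>i\<in>{i\<in>{1..d}. m \<le> n i}. \<nu> i)" for m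
  have Sgc: "\<Sigma> \<in> carrier_mat p p" using Sgpd by (simp add: pd_iff)
  have dS: "det \<Sigma> > 0" using pd_det_pos[OF Sgpd] .
  note Si = inv_props[OF Sgc, of] dS
  have Si1: "inv_mat \<Sigma> \<in> carrier_mat p p" "inv_mat \<Sigma> * \<Sigma> = 1\<^sub>m p"
    using inv_props[OF Sgc] dS by auto
  have Sc: "S \<in> carrier_mat p p" using Si1 by (simp add: S_def)
  have SSg: "S * Sg2 = 1\<^sub>m p"
  proof -
    have "S * Sg2 = (1/2) \<cdot>\<^sub>m (inv_mat \<Sigma> * (2 \<cdot>\<^sub>m \<Sigma>))"
      unfolding S_def Sg2_def by (rule mult_smult_assoc_mat[OF Si1(1), of "2 \<cdot>\<^sub>m \<Sigma>" p]) (use Sgc in simp)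
    also have "inv_mat \<Sigma> * (2 \<cdot>\<^sub>m \<Sigma>) = 2 \<cdot>\<^sub>m (inv_mat \<Sigma> * \<Sigma>)"
      by (rule mult_smult_distrib[OF Si1(1) Sgc])
    also have "inv_mat \<Sigma> * \<Sigma> = 1\<^sub>m p" by (rule Si1(2))
    also have "(1/2) \<cdot>\<^sub>m (2 \<cdot>\<^sub>m 1\<^sub>m p) = (1\<^sub>m p :: real mat)" by (rule eq_matI) auto
    finally show ?thesis .
  qed
  have Sg2pd: "pos_def_mat p Sg2" using pd_smult[OF Sgpd, of 2] by (simp add: Sg2_def)
  have nle: "\<forall>i\<in>{1..d}. n i \<le> p"
  proof
    fix i assume "i \<in> {1..d}"
    thus "n i \<le> p" unfolding n_def p_def by (intro psum_mono) auto
  qed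
  have sm_nn: "sm m \<ge> 0" for m using nu by (auto simp: sm_def intro!: sum_nonneg)
  have cond: "\<forall>m\<in>{1..p}. \<alpha> / 2 + (\<Sum>i\<in>{i\<in>{1..d}. m \<le> n i}. \<nu> i) > (real m - 1) / 2"
  proof
    fix m assume "m \<in> {1..p}"
    hence "(real m - 1) / 2 < \<alpha> / 2" using alpha by auto
    thus "\<alpha> / 2 + (\<Sum>i\<in>{i\<in>{1..d}. m \<le> n i}. \<nu> i) > (real m - 1) / 2" using sm_nn[of m] by (simp add: sm_def)
  qed
  have core_app: "(\<integral>\<^sup>+x. ennreal (wint p S (\<alpha>/2) n \<nu> {1..d} x) \<partial>sym_lebesgue p) = ennreal (wval p Sg2 (\<alpha>/2) n \<nu> {1..d})"
    by (rule core[OF _ Sg2pd Sc SSg nle cond]) simp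
  have wm: "wint p S (\<alpha>/2) n \<nu> {1..d} \<in> borel_measurable (sym_lebesgue p)" by (rule wint_meas[OF Sc nle])
  have gm: "g \<in> borel_measurable (sym_lebesgue p)"
    unfolding g_def
  proof (intro borel_measurable_prod powr_real_measurable borel_measurable_const)
    fix i assume "i \<in> {1..d}"
    thus "(\<lambda>x. det (lead_submat (n i) (sym_of p x))) \<in> borel_measurable (sym_lebesgue p)"
      using nle meas_det_lead by auto
  qed
  have Cpos: "C > 0"
  proof -
    have "det (2 \<cdot>\<^sub>m \<Sigma>) > 0" using pd_det_pos[OF Sg2pd] by (simp add: Sg2_def)
    moreover have "multigamma p (\<alpha> / 2) > 0"
    proof -
      have "(\<Prod>k=1..p. Gamma (\<alpha> / 2 - (real k - 1) / 2)) > 0"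
      proof (intro prod_pos Gamma_real_pos)
        fix k assume "k \<in> {1..p}"
        hence "real k \<le> real p" by simp
        thus "0 < \<alpha> / 2 - (real k - 1) / 2" using alpha by (simp add: field_simps)
      qed
      moreover have "\<alpha> / 2 > (real p - 1) / 2" using alpha by simp
      ultimately show ?thesis by (simp add: multigamma_eq)
    qed
    ultimately show ?thesis unfolding C_def by (intro mult_pos_pos) (auto simp del: det_smult)
  qed
  have dens: "wishart_density p \<alpha> \<Sigma> x * g x = wint p S (\<alpha>/2) n \<nu> {1..d} x / C" for x
  proof -
    have "etr (- ((1 / 2) \<cdot>\<^sub>m inv_mat \<Sigma>) * sym_of p x) = exp (- mat_trace (S * sym_of p x))"
    proof -
      have "- ((1 / 2) \<cdot>\<^sub>m inv_mat \<Sigma>) * sym_of p x = - (S * sym_of p x)"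
        unfolding S_def by (rule uminus_mult_left_mat) (use Si1 in \<open>simp add: sym_of_def\<close>)
      thus ?thesis using Sc by (simp add: etr_def trace_uminus[OF mult_carrier_mat[OF Sc sym_of_carrier]])
    qed
    thus ?thesis by (simp add: wishart_density_def wint_def g_def C_def ac_simps)
  qed
  have "prob_space.expectation M (\<lambda>\<omega>. \<Prod>i = 1..d. det (lead_submat (\<Sum>k = 1..i. ps k) (sym_of p (X \<omega>))) powr \<nu> i)
      = (\<integral>\<omega>. g (X \<omega>) \<partial>M)" by (simp add: g_def n_def)
  also have "\<dots> = (\<integral>x. wishart_density p \<alpha> \<Sigma> x * g x \<partial>sym_lebesgue p)"
  proof (rule distributed_integral[symmetric])
    show "distributed M (sym_lebesgue p) X (\<lambda>x. ennreal (wishart_density p \<alpha> \<Sigma> x))"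
      using W by (simp add: wishart_distributed_def)
    show "g \<in> borel_measurable (sym_lebesgue p)" by (rule gm)
    fix x show "0 \<le> wishart_density p \<alpha> \<Sigma> x"
      unfolding wishart_density_def C_def[symmetric] using Cpos
      by (intro divide_nonneg_pos mult_nonneg_nonneg) (simp_all add: etr_def)
  qed
  also have "\<dots> = (\<integral>x. wint p S (\<alpha>/2) n \<nu> {1..d} x \<partial>sym_lebesgue p) / C"
    by (simp add: dens)
  also have "(\<integral>x. wint p S (\<alpha>/2) n \<nu> {1..d} x \<partial>sym_lebesgue p) = wval p Sg2 (\<alpha>/2) n \<nu> {1..d}"
    using integral_eq_nn_integral[OF wm] core_app wval_nonneg[OF cond] by (simp add: wint_nonneg)
  finally have E: "prob_space.expectation M (\<lambda>\<omega>. \<Prod>i = 1..d. det (lead_submat (\<Sum>k = 1..i. ps k) (sym_of p (X \<omega>))) powr \<nu> i)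
      = wval p Sg2 (\<alpha>/2) n \<nu> {1..d} / C" .
  define GN where "GN = (\<Prod>m=1..p. Gamma (\<alpha>/2 + sm m - (real m - 1) / 2))"
  define GD where "GD = (\<Prod>m=1..p. Gamma (\<alpha>/2 - (real m - 1) / 2))"
  define DN where "DN = (\<Prod>i=1..d. det (2 \<cdot>\<^sub>m lead_submat (n i) \<Sigma>) powr \<nu> i)"
  have GDpos: "GD > 0" using alpha unfolding GD_def by (intro prod_pos) (auto intro!: Gamma_real_pos)
  have lead2: "lead_submat (n i) Sg2 = 2 \<cdot>\<^sub>m lead_submat (n i) \<Sigma>" if "i \<in> {1..d}" for i
  proof (rule eq_matI)
    fix a b assume ab: "a < dim_row (2 \<cdot>\<^sub>m lead_submat (n i) \<Sigma>)" "b < dim_col (2 \<cdot>\<^sub>m lead_submat (n i) \<Sigma>)"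
    have "n i \<le> p" using nle that by auto
    thus "lead_submat (n i) Sg2 $$ (a, b) = (2 \<cdot>\<^sub>m lead_submat (n i) \<Sigma>) $$ (a, b)"
      using ab Sgc by (simp add: Sg2_def)
  qed simp_all
  have DN': "(\<Prod>i\<in>{1..d}. det (lead_submat (n i) Sg2) powr \<nu> i) = DN"
    unfolding DN_def by (rule prod.cong) (simp_all add: lead2)
  have wv: "wval p Sg2 (\<alpha>/2) n \<nu> {1..d} = pi powr (real p * (real p - 1) / 4) * GN * det (2 \<cdot>\<^sub>m \<Sigma>) powr (\<alpha>/2) * DN"
    unfolding wval_def DN' unfolding GN_def sm_def Sg2_def ..
  have mg: "multigamma p (\<alpha> / 2) = pi powr (real p * (real p - 1) / 4) * GD"
    using alpha by (simp add: multigamma_eq GD_def)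
  have dpos: "det (2 \<cdot>\<^sub>m \<Sigma>) powr (\<alpha>/2) > 0" using dS by simp
  have E2: "wval p Sg2 (\<alpha>/2) n \<nu> {1..d} / C = DN * (GN / GD)"
    unfolding wv C_def mg using dpos GDpos by (simp add: field_simps)
  have blocks: "(\<Prod>j=1..ps i. Gamma (\<alpha>/2 + sm (m0 i + j) - (real (m0 i + j) - 1) / 2)) /
      (\<Prod>j=1..ps i. Gamma (\<alpha>/2 - (real (m0 i + j) - 1) / 2))
      = multigamma (ps i) (\<alpha> / 2 - (\<Sum>k = 1..<i. real (ps k) / 2) + (\<Sum>k = i..d. \<nu> k))
        / multigamma (ps i) (\<alpha> / 2 - (\<Sum>k = 1..<i. real (ps k) / 2))" if i: "i \<in> {1..d}" for i
  proof -
    have m0r: "(\<Sum>k = 1..<i. real (ps k) / 2) = real (m0 i) / 2"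
      by (simp add: m0_def sum_divide_distrib)
    have m0n: "m0 i + ps i = n i" using i by (simp add: m0_def n_def sum.last_plus atLeastLessThanSuc_atLeastAtMost[symmetric])
    have smj: "sm (m0 i + j) = (\<Sum>k = i..d. \<nu> k)" if j: "j \<in> {1..ps i}" for j
    proof -
      have "{k\<in>{1..d}. m0 i + j \<le> n k} = {i..d}"
      proof
        show "{k\<in>{1..d}. m0 i + j \<le> n k} \<subseteq> {i..d}"
        proof
          fix k assume k: "k \<in> {k\<in>{1..d}. m0 i + j \<le> n k}"
          show "k \<in> {i..d}"
          proof (rule ccontr)
            assume "k \<notin> {i..d}"
            hence "k < i" using k by auto
            hence "n k \<le> m0 i" unfolding n_def m0_def by (intro sum_mono2) auto
            thus False using k j by auto
          qed
        qed
        show "{i..d} \<subseteq> {k\<in>{1..d}. m0 i + j \<le> n k}"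
        proof
          fix k assume k: "k \<in> {i..d}"
          hence "n i \<le> n k" unfolding n_def by (intro psum_mono) auto
          thus "k \<in> {k\<in>{1..d}. m0 i + j \<le> n k}" using k j m0n i by auto
        qed
      qed
      thus ?thesis by (simp add: sm_def)
    qed
    have le: "m0 i + ps i \<le> p" using m0n nle i by auto
    have c1: "\<alpha> / 2 - real (m0 i) / 2 > (real (ps i) - 1) / 2" using alpha le by (simp add: field_simps)
    have c2: "\<alpha> / 2 - real (m0 i) / 2 + (\<Sum>k = i..d. \<nu> k) > (real (ps i) - 1) / 2"
    proof -
      have "(\<Sum>k = i..d. \<nu> k) \<ge> 0" using nu i by (intro sum_nonneg) auto
      thus ?thesis using c1 by linarith
    qed
    have num: "(\<Prod>j=1..ps i. Gamma (\<alpha>/2 + sm (m0 i + j) - (real (m0 i + j) - 1) / 2)) =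
        (\<Prod>j=1..ps i. Gamma (\<alpha> / 2 - real (m0 i) / 2 + (\<Sum>k = i..d. \<nu> k) - (real j - 1) / 2))"
    proof (rule prod.cong[OF refl])
      fix j assume j: "j \<in> {1..ps i}"
      show "Gamma (\<alpha>/2 + sm (m0 i + j) - (real (m0 i + j) - 1) / 2) =
          Gamma (\<alpha> / 2 - real (m0 i) / 2 + (\<Sum>k = i..d. \<nu> k) - (real j - 1) / 2)"
        unfolding smj[OF j] by (simp add: field_simps)
    qed
    have den: "(\<Prod>j=1..ps i. Gamma (\<alpha>/2 - (real (m0 i + j) - 1) / 2)) =
        (\<Prod>j=1..ps i. Gamma (\<alpha> / 2 - real (m0 i) / 2 - (real j - 1) / 2))"
    proof (rule prod.cong[OF refl])
      fix j :: nat
      have "\<alpha>/2 - (real (m0 i + j) - 1) / 2 = \<alpha> / 2 - real (m0 i) / 2 - (real j - 1) / 2"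
        by (simp add: field_simps)
      thus "Gamma (\<alpha>/2 - (real (m0 i + j) - 1) / 2) = Gamma (\<alpha> / 2 - real (m0 i) / 2 - (real j - 1) / 2)"
        by (simp only:)
    qed
    show ?thesis unfolding num den m0r multigamma_eq[OF c1] multigamma_eq[OF c2] by simp
  qed
  have GNr: "GN = (\<Prod>i=1..d. \<Prod>j=1..ps i. Gamma (\<alpha>/2 + sm (m0 i + j) - (real (m0 i + j) - 1) / 2))"
    unfolding GN_def p_def m0_def by (rule regroup)
  have GDr: "GD = (\<Prod>i=1..d. \<Prod>j=1..ps i. Gamma (\<alpha>/2 - (real (m0 i + j) - 1) / 2))"
    unfolding GD_def p_def m0_def by (rule regroup)
  have "DN * (GN / GD) = (\<Prod>i = 1..d. det (2 \<cdot>\<^sub>m lead_submat (n i) \<Sigma>) powr \<nu> i *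
      ((\<Prod>j=1..ps i. Gamma (\<alpha>/2 + sm (m0 i + j) - (real (m0 i + j) - 1) / 2)) /
      (\<Prod>j=1..ps i. Gamma (\<alpha>/2 - (real (m0 i + j) - 1) / 2))))"
    unfolding GNr GDr DN_def prod_dividef[symmetric] prod.distrib ..
  also have "\<dots> = (\<Prod>i = 1..d. det (2 \<cdot>\<^sub>m lead_submat (\<Sum>k = 1..i. ps k) \<Sigma>) powr \<nu> i *
            (multigamma (ps i) (\<alpha> / 2 - (\<Sum>k = 1..<i. real (ps k) / 2) + (\<Sum>k = i..d. \<nu> k))
            / multigamma (ps i) (\<alpha> / 2 - (\<Sum>k = 1..<i. real (ps k) / 2))))"
  proof (rule prod.cong[OF refl])
    fix i assume i: "i \<in> {1..d}"
    show "det (2 \<cdot>\<^sub>m lead_submat (n i) \<Sigma>) powr \<nu> i *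
      ((\<Prod>j=1..ps i. Gamma (\<alpha>/2 + sm (m0 i + j) - (real (m0 i + j) - 1) / 2)) /
      (\<Prod>j=1..ps i. Gamma (\<alpha>/2 - (real (m0 i + j) - 1) / 2))) =
      det (2 \<cdot>\<^sub>m lead_submat (\<Sum>k = 1..i. ps k) \<Sigma>) powr \<nu> i *
            (multigamma (ps i) (\<alpha> / 2 - (\<Sum>k = 1..<i. real (ps k) / 2) + (\<Sum>k = i..d. \<nu> k))
            / multigamma (ps i) (\<alpha> / 2 - (\<Sum>k = 1..<i. real (ps k) / 2)))"
      by (simp only: blocks[OF i] n_def)
  qed
  finally show ?thesis using E E2 by (simp add: mult.assoc)
qed

end
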